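(* Fix $\mu\in(0,1)$ and $0<\varepsilon<\sqrt{\mu}$. For $N\ge 1$ let $Z_t=(X_t,Y_t)$ be the diffusion on $[0,1]^2$ with generator $$L_1 f=\tfrac12 x(1-x)\tfrac{\partial^2 f}{\partial x^2}+2N(1-x)(\mu-x^2y^2)\tfrac{\partial f}{\partial x}+\tfrac12 y(1-y)\tfrac{\partial^2 f}{\partial y^2}+2N(1-y)(\mu-x^2y^2)\tfrac{\partial f}{\partial y},$$ and let $Z^0_t$ be the solution of the ordinary differential equation $\frac{dx}{dt}=2N(1-x)(\mu-x^2y^2)$, $\frac{dy}{dt}=2N(1-y)(\mu-x^2y^2)$ (i.e. the system $\frac{dx}{dt}=(1-x)(\mu-x^2y^2)$, $\frac{dy}{dt}=(1-y)(\mu-x^2y^2)$ run at rate $2N$), both started from the same point $(X_0,Y_0)$. Then there is a constant $\gamma>0$ depending on $\varepsilon$ (and $\mu$) such that for all $N$ sufficiently large and all $(X_0,Y_0)\in[\varepsilon,1-\varepsilon]^2$, $$E\Big(\sup_{0\le t\le \gamma\log N/N}|Z_t-Z^0_t|^2\Big)\le N^{-1/2}.$$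
   Context: This is the diffusion limit (Kimura–King) of Watterson's double recessive null model of gene duplication: $x$ and $y$ are the frequencies of nonfunctional alleles at the two unlinked duplicate loci, and $\mu$ is the (fixed, $N$-independent) mutation rate to nonfunctional alleles. *)

theory Defs
  imports "HOL-Probability.Probability"
begin

definition C2_partials ::
  "(real \<times> real \<Rightarrow> real) \<Rightarrow> (real \<times> real \<Rightarrow> real) \<Rightarrow> (real \<times> real \<Rightarrow> real) \<Rightarrow>
   (real \<times> real \<Rightarrow> real) \<Rightarrow> (real \<times> real \<Rightarrow> real) \<Rightarrow> (real \<times> real \<Rightarrow> real) \<Rightarrow> bool" where
  "C2_partials f fx fy fxx fxy fyy \<longleftrightarrow>
     (\<forall>x y. ((\<lambda>u. f (u, y)) has_real_derivative fx (x, y)) (at x) \<and>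
            ((\<lambda>v. f (x, v)) has_real_derivative fy (x, y)) (at y) \<and>
            ((\<lambda>u. fx (u, y)) has_real_derivative fxx (x, y)) (at x) \<and>
            ((\<lambda>v. fx (x, v)) has_real_derivative fxy (x, y)) (at y) \<and>
            ((\<lambda>v. fy (x, v)) has_real_derivative fyy (x, y)) (at y)) \<and>
     continuous_on UNIV f \<and> continuous_on UNIV fx \<and> continuous_on UNIV fy \<and>
     continuous_on UNIV fxx \<and> continuous_on UNIV fxy \<and> continuous_on UNIV fyy"

definition L1 :: "nat \<Rightarrow> real \<Rightarrow> (real \<times> real \<Rightarrow> real) \<Rightarrow> (real \<times> real \<Rightarrow> real) \<Rightarrow>
    (real \<times> real \<Rightarrow> real) \<Rightarrow> (real \<times> real \<Rightarrow> real) \<Rightarrow> real \<times> real \<Rightarrow> real" where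
  "L1 N \<mu> fx fy fxx fyy z =
     (let x = fst z; y = snd z in
        1/2 * x * (1 - x) * fxx z + 2 * real N * (1 - x) * (\<mu> - x^2 * y^2) * fx z
      + 1/2 * y * (1 - y) * fyy z + 2 * real N * (1 - y) * (\<mu> - x^2 * y^2) * fy z)"

definition is_filtration :: "'a measure \<Rightarrow> (real \<Rightarrow> 'a measure) \<Rightarrow> bool" where
  "is_filtration M F \<longleftrightarrow>
     (\<forall>t. space (F t) = space M \<and> sets (F t) \<subseteq> sets M) \<and>
     (\<forall>s t. 0 \<le> s \<longrightarrow> s \<le> t \<longrightarrow> sets (F s) \<subseteq> sets (F t))"

text \<open>Z is the diffusion with generator L1 started at z0: a continuous [0,1]^2-valued
  process, adapted to the filtration F, solving the (Stroock--Varadhan) martingale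
  problem for L1, i.e. for every C^2 function f,
  f(Z_t) - f(Z_0) - int_0^t L1 f(Z_s) ds is an F-martingale.\<close>
definition solves_mp_L1 ::
  "nat \<Rightarrow> real \<Rightarrow> 'a measure \<Rightarrow> (real \<Rightarrow> 'a measure) \<Rightarrow> (real \<Rightarrow> 'a \<Rightarrow> real \<times> real)
     \<Rightarrow> real \<times> real \<Rightarrow> bool" where
  "solves_mp_L1 N \<mu> M F Z z0 \<longleftrightarrow>
     prob_space M \<and> is_filtration M F \<and>
     (\<forall>t\<ge>0. Z t \<in> borel_measurable (F t)) \<and>
     (\<forall>\<omega>\<in>space M. Z 0 \<omega> = z0 \<and> continuous_on {0..} (\<lambda>t. Z t \<omega>) \<and>
        (\<forall>t\<ge>0. Z t \<omega> \<in> {0..1} \<times> {0..1})) \<and>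
     (\<forall>f fx fy fxx fxy fyy. C2_partials f fx fy fxx fxy fyy \<longrightarrow>
        (let Mf = (\<lambda>t \<omega>. f (Z t \<omega>) - f (Z 0 \<omega>)
                          - integral {0..t} (\<lambda>s. L1 N \<mu> fx fy fxx fyy (Z s \<omega>)))
         in (\<forall>t\<ge>0. integrable M (Mf t) \<and> Mf t \<in> borel_measurable (F t)) \<and>
            (\<forall>s t. 0 \<le> s \<longrightarrow> s \<le> t \<longrightarrow>
               (\<forall>A\<in>sets (F s). (LINT \<omega>:A|M. Mf t \<omega>) = (LINT \<omega>:A|M. Mf s \<omega>)))))"

definition ode_sol_L1 :: "nat \<Rightarrow> real \<Rightarrow> real \<times> real \<Rightarrow> (real \<Rightarrow> real \<times> real) \<Rightarrow> bool" where
  "ode_sol_L1 N \<mu> z0 w \<longleftrightarrow> w 0 = z0 \<and>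
     (\<forall>t\<ge>0. (w has_vector_derivative
        (2 * real N * (1 - fst (w t)) * (\<mu> - (fst (w t))^2 * (snd (w t))^2),
         2 * real N * (1 - snd (w t)) * (\<mu> - (fst (w t))^2 * (snd (w t))^2)))
        (at t within {0..}))"

end

theory Submission
  imports Defs
begin


definition mart :: "'a measure \<Rightarrow> (real \<Rightarrow> 'a measure) \<Rightarrow> (real \<Rightarrow> 'a \<Rightarrow> real) \<Rightarrow> bool" where
  "mart M F Mt \<longleftrightarrow> (\<forall>t\<ge>0. integrable M (Mt t) \<and> Mt t \<in> borel_measurable (F t)) \<and>
     (\<forall>s t. 0 \<le> s \<longrightarrow> s \<le> t \<longrightarrow> (\<forall>A\<in>sets (F s). (LINT \<omega>:A|M. Mt t \<omega>) = (LINT \<omega>:A|M. Mt s \<omega>)))"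

lemma orth:
  assumes P: "prob_space M" and Fi: "is_filtration M F" and m: "mart M F Mt"
    and st: "0 \<le> s" "s \<le> t" and h: "h \<in> borel_measurable (F s)" and hb: "\<And>\<omega>. \<omega> \<in> space M \<Longrightarrow> \<bar>h \<omega>\<bar> \<le> C"
  shows "(\<integral>\<omega>. h \<omega> * (Mt t \<omega> - Mt s \<omega>) \<partial>M) = 0"
proof -
  interpret prob_space M by fact
  have sub: "subalgebra M (F s)" using Fi unfolding is_filtration_def subalgebra_def by auto
  interpret S: finite_measure_subalgebra M "F s"
    by unfold_locales (rule sub)
  have it: "integrable M (Mt t)" and iS: "integrable M (Mt s)" and ms: "Mt s \<in> borel_measurable (F s)"
    using m st unfolding mart_def by auto
  have mt: "Mt t \<in> borel_measurable M" using it by auto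
  have hM: "h \<in> borel_measurable M" by (rule measurable_from_subalg[OF sub h])
  have AE: "AE x in M. real_cond_exp M (F s) (Mt t) x = Mt s x"
  proof (rule S.real_cond_exp_charact)
    fix A assume "A \<in> sets (F s)"
    then show "(LINT x:A|M. Mt t x) = (LINT x:A|M. Mt s x)" using m st unfolding mart_def by blast
  qed (use it iS ms in auto)
  have iht: "integrable M (\<lambda>x. h x * Mt t x)"
  proof (rule Bochner_Integration.integrable_bound[where f="\<lambda>x. C * Mt t x"])
    show "integrable M (\<lambda>x. C * Mt t x)" using it by simp
    show "(\<lambda>x. h x * Mt t x) \<in> borel_measurable M" using hM mt by measurable
    show "AE x in M. norm (h x * Mt t x) \<le> norm (C * Mt t x)"
      using hb by (auto simp: abs_mult intro!: mult_right_mono AE_I2 intro: order_trans[OF _ abs_ge_self])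
  qed
  have ihs: "integrable M (\<lambda>x. h x * Mt s x)"
  proof (rule Bochner_Integration.integrable_bound[where f="\<lambda>x. C * Mt s x"])
    show "integrable M (\<lambda>x. C * Mt s x)" using iS by simp
    show "(\<lambda>x. h x * Mt s x) \<in> borel_measurable M" using hM iS by measurable
    show "AE x in M. norm (h x * Mt s x) \<le> norm (C * Mt s x)"
      using hb by (auto simp: abs_mult intro!: mult_right_mono AE_I2 intro: order_trans[OF _ abs_ge_self])
  qed
  have "(\<integral>x. h x * Mt t x \<partial>M) = (\<integral>x. h x * real_cond_exp M (F s) (Mt t) x \<partial>M)"
    using S.real_cond_exp_intg(2)[OF iht h mt] by simp
  also have "\<dots> = (\<integral>x. h x * Mt s x \<partial>M)"
    by (rule integral_cong_AE) (use AE hM mt ihs in auto)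
  finally show ?thesis using iht ihs by (simp add: right_diff_distrib)
qed

fun rmax :: "(nat \<Rightarrow> real) \<Rightarrow> nat \<Rightarrow> real" where
  "rmax x 0 = \<bar>x 0\<bar>"
| "rmax x (Suc k) = max (rmax x k) \<bar>x (Suc k)\<bar>"

lemma rmax_ge: "k \<le> n \<Longrightarrow> \<bar>x k\<bar> \<le> rmax x n"
proof (induction n)
  case 0 then show ?case by simp
next
  case (Suc n) then show ?case by (cases "k = Suc n") auto
qed

lemma rmax_nonneg: "0 \<le> rmax x n"
  by (induction n) auto

lemma rmax_le: "(\<And>k. k \<le> n \<Longrightarrow> \<bar>x k\<bar> \<le> B) \<Longrightarrow> rmax x n \<le> B"
  by (induction n) auto

lemma doob_aux: "4 * (\<Sum>k<n. rmax x k * (\<bar>x (Suc k)\<bar> - \<bar>x k\<bar>)) \<le> 4 * rmax x n * \<bar>x n\<bar> - 2 * (rmax x n)^2"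
proof (induction n)
  case 0 then show ?case by (simp add: power2_eq_square)
next
  case (Suc n)
  define m where "m = rmax x n"
  define a where "a = \<bar>x (Suc n)\<bar>"
  have "4 * m * a - 2 * m^2 \<le> 4 * max m a * a - 2 * (max m a)^2"
  proof (cases "a \<le> m")
    case True then show ?thesis by (simp add: max_def)
  next
    case False
    have "0 \<le> 2 * (a - m)^2" by simp
    then show ?thesis using False by (simp add: max_def power2_eq_square algebra_simps)
  qed
  then show ?case using Suc by (simp add: m_def a_def algebra_simps)
qed

lemma doob_path: "(rmax x n)^2 \<le> 4 * (x n)^2 - 4 * (\<Sum>k<n. rmax x k * sgn (x k) * (x (Suc k) - x k))"
proof -
  have "(\<Sum>k<n. rmax x k * sgn (x k) * (x (Suc k) - x k)) \<le> (\<Sum>k<n. rmax x k * (\<bar>x (Suc k)\<bar> - \<bar>x k\<bar>))"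
  proof (rule sum_mono)
    fix k
    have "sgn (x k) * (x (Suc k) - x k) \<le> \<bar>x (Suc k)\<bar> - \<bar>x k\<bar>"
      by (cases "x k" rule: linorder_cases) (auto simp: sgn_if abs_if)
    then show "rmax x k * sgn (x k) * (x (Suc k) - x k) \<le> rmax x k * (\<bar>x (Suc k)\<bar> - \<bar>x k\<bar>)"
      using rmax_nonneg[of x k] by (metis mult.assoc mult_left_mono)
  qed
  moreover have "0 \<le> (2 * \<bar>x n\<bar> - rmax x n)^2" by simp
  moreover have "(2 * \<bar>x n\<bar> - rmax x n)^2 = 4 * (x n)^2 - 4 * rmax x n * \<bar>x n\<bar> + (rmax x n)^2"
    by (simp add: power2_eq_square algebra_simps)
  ultimately show ?thesis using doob_aux[of x n] by linarith
qed

lemma sq_bound: "\<bar>a::real\<bar> \<le> B \<Longrightarrow> \<bar>a^2\<bar> \<le> B * B"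
  by (simp add: power2_eq_square[symmetric]) (metis abs_ge_zero power2_abs power_mono)

lemma meas_mono_filt:
  assumes "is_filtration M F" "0 \<le> s" "s \<le> t" "f \<in> borel_measurable (F s)"
  shows "f \<in> borel_measurable (F t)"
proof -
  have "subalgebra (F t) (F s)" using assms unfolding is_filtration_def subalgebra_def by auto
  then show ?thesis using measurable_from_subalg assms(4) by blast
qed

lemma meas_filt_M:
  assumes "is_filtration M F" "f \<in> borel_measurable (F s)"
  shows "f \<in> borel_measurable M"
proof -
  have "subalgebra M (F s)" using assms unfolding is_filtration_def subalgebra_def by auto
  then show ?thesis using measurable_from_subalg assms(2) by blast
qed

lemma doob_grid:
  assumes P: "prob_space M" and Fi: "is_filtration M F" and m: "mart M F Mt"
    and T: "0 \<le> T" and n: "0 < n" and bd: "\<And>t \<omega>. \<omega> \<in> space M \<Longrightarrow> 0 \<le> t \<Longrightarrow> t \<le> T \<Longrightarrow> \<bar>Mt t \<omega>\<bar> \<le> B"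
  shows "(\<integral>\<omega>. (rmax (\<lambda>k. Mt (real k * T / real n) \<omega>) n)^2 \<partial>M) \<le> 4 * (\<integral>\<omega>. (Mt T \<omega>)^2 \<partial>M)"
proof -
  interpret prob_space M by fact
  define tt where "tt k = real k * T / real n" for k
  have tt0: "0 \<le> tt k" for k using T by (simp add: tt_def)
  have ttn: "k \<le> n \<Longrightarrow> tt k \<le> T" for k using T n by (simp add: tt_def field_simps mult_left_mono)
  have ttm: "j \<le> k \<Longrightarrow> tt j \<le> tt k" for j k using T n by (simp add: tt_def divide_right_mono mult_right_mono)
  have ttN: "tt n = T" using n by (simp add: tt_def)
  define x where "x \<omega> k = Mt (tt k) \<omega>" for \<omega> k
  have xF: "(\<lambda>\<omega>. x \<omega> k) \<in> borel_measurable (F (tt k))" for k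
    using m tt0 unfolding mart_def x_def by auto
  have xM: "(\<lambda>\<omega>. x \<omega> k) \<in> borel_measurable M" for k using meas_filt_M[OF Fi xF] .
  have xb: "\<omega> \<in> space M \<Longrightarrow> k \<le> n \<Longrightarrow> \<bar>x \<omega> k\<bar> \<le> B" for k \<omega> using bd tt0 ttn unfolding x_def by auto
  have rF: "k \<le> K \<Longrightarrow> (\<lambda>\<omega>. rmax (x \<omega>) k) \<in> borel_measurable (F (tt K))" for k K
  proof (induction k)
    case 0 then show ?case using meas_mono_filt[OF Fi tt0 ttm xF] by simp
  next
    case (Suc k)
    have "(\<lambda>\<omega>. x \<omega> (Suc k)) \<in> borel_measurable (F (tt K))" using meas_mono_filt[OF Fi tt0 ttm xF] Suc by simp
    then show ?case using Suc by simp
  qed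
  have rM: "(\<lambda>\<omega>. rmax (x \<omega>) k) \<in> borel_measurable M" for k using meas_filt_M[OF Fi rF[of k k]] by simp
  have rb: "\<omega> \<in> space M \<Longrightarrow> k \<le> n \<Longrightarrow> \<bar>rmax (x \<omega>) k\<bar> \<le> B" for k \<omega>
    using rmax_le[of k "x \<omega>" B] xb[of \<omega>] rmax_nonneg[of "x \<omega>" k] by auto
  define h where "h k \<omega> = rmax (x \<omega>) k * sgn (x \<omega> k)" for k \<omega>
  have hF: "h k \<in> borel_measurable (F (tt k))" for k
    unfolding h_def using rF[of k k] meas_mono_filt[OF Fi tt0 ttm xF] by simp
  have hM: "h k \<in> borel_measurable M" for k using meas_filt_M[OF Fi hF] .
  have hb: "\<omega> \<in> space M \<Longrightarrow> k \<le> n \<Longrightarrow> \<bar>h k \<omega>\<bar> \<le> B" for k \<omega>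
    using rb[of \<omega> k] by (auto simp: h_def abs_mult sgn_if)
  have ib: "integrable M f" if "f \<in> borel_measurable M" "\<And>\<omega>. \<omega> \<in> space M \<Longrightarrow> \<bar>f \<omega>\<bar> \<le> C" for f :: "'a \<Rightarrow> real" and C :: real
    using that by (intro integrable_const_bound[where B=C]) auto
  have orthk: "(\<integral>\<omega>. h k \<omega> * (x \<omega> (Suc k) - x \<omega> k) \<partial>M) = 0" if "k < n" for k
  proof -
    have "\<bar>h k \<omega>\<bar> \<le> B" if "\<omega> \<in> space M" for \<omega> using hb \<open>k < n\<close> that by simp
    then show ?thesis unfolding x_def using orth[OF P Fi m tt0[of k] ttm[of k "Suc k"] hF[of k], where C=B] by simp
  qed
  have int_term: "integrable M (\<lambda>\<omega>. h k \<omega> * (x \<omega> (Suc k) - x \<omega> k))" if "k < n" for k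
    apply (rule ib[of _ "B * (B + B)"])
    using hM xM apply measurable
  proof -
    fix \<omega> assume om: "\<omega> \<in> space M"
    have B0: "0 \<le> B" using xb[of \<omega> 0] om by simp
    have "\<bar>x \<omega> (Suc k) - x \<omega> k\<bar> \<le> B + B" using xb[of \<omega> k] xb[of \<omega> "Suc k"] that om by simp
    then show "\<bar>h k \<omega> * (x \<omega> (Suc k) - x \<omega> k)\<bar> \<le> B * (B + B)"
      unfolding abs_mult using hb[of \<omega> k] that B0 om by (intro mult_mono) auto
  qed
  have isq: "integrable M (\<lambda>\<omega>. (x \<omega> n)^2)"
    apply (rule ib[of _ "B * B"])
    using xM apply measurable
    using xb[of _ n] sq_bound by blast
  have irsq: "integrable M (\<lambda>\<omega>. (rmax (x \<omega>) n)^2)"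
    apply (rule ib[of _ "B * B"])
    using rM apply measurable
    using rb[of _ n] sq_bound by blast
  have isum: "integrable M (\<lambda>\<omega>. \<Sum>k<n. h k \<omega> * (x \<omega> (Suc k) - x \<omega> k))"
    by (rule Bochner_Integration.integrable_sum) (use int_term in auto)
  have "(\<integral>\<omega>. (rmax (x \<omega>) n)^2 \<partial>M) \<le> (\<integral>\<omega>. 4 * (x \<omega> n)^2 - 4 * (\<Sum>k<n. h k \<omega> * (x \<omega> (Suc k) - x \<omega> k)) \<partial>M)"
    apply (rule integral_mono)
    using irsq isq isum apply simp
    using isq isum apply simp
    unfolding h_def by (rule doob_path)
  also have "\<dots> = 4 * (\<integral>\<omega>. (x \<omega> n)^2 \<partial>M) - 4 * (\<Sum>k<n. (\<integral>\<omega>. h k \<omega> * (x \<omega> (Suc k) - x \<omega> k) \<partial>M))"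
    using isq isum int_term by (simp add: Bochner_Integration.integral_sum)
  also have "\<dots> = 4 * (\<integral>\<omega>. (x \<omega> n)^2 \<partial>M)" using orthk by simp
  finally show ?thesis unfolding x_def using ttN by (simp add: tt_def)
qed




lemma int_ub:
  fixes f :: "real \<Rightarrow> real"
  assumes "continuous_on {a..b} f" "a \<le> b" "\<And>s. s \<in> {a..b} \<Longrightarrow> f s \<le> c"
  shows "integral {a..b} f \<le> (b - a) * c"
proof -
  have "integral {a..b} f \<le> integral {a..b} (\<lambda>s. c)"
    by (rule integral_le) (use assms in \<open>auto intro: integrable_continuous_interval\<close>)
  then show ?thesis using assms(2) by simp
qed

lemma int_lb:
  fixes f :: "real \<Rightarrow> real"
  assumes "continuous_on {a..b} f" "a \<le> b" "\<And>s. s \<in> {a..b} \<Longrightarrow> c \<le> f s"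
  shows "(b - a) * c \<le> integral {a..b} f"
proof -
  have "integral {a..b} (\<lambda>s. c) \<le> integral {a..b} f"
    by (rule integral_le) (use assms in \<open>auto intro: integrable_continuous_interval\<close>)
  then show ?thesis using assms(2) by simp
qed

lemma int_abs:
  fixes f :: "real \<Rightarrow> real"
  assumes "continuous_on {a..b} f" "a \<le> b" "\<And>s. s \<in> {a..b} \<Longrightarrow> \<bar>f s\<bar> \<le> c"
  shows "\<bar>integral {a..b} f\<bar> \<le> (b - a) * c"
proof -
  have "integral {a..b} f \<le> (b - a) * c" by (rule int_ub[OF assms(1,2)]) (use assms(3) in \<open>auto simp: abs_le_iff\<close>)
  moreover have "(b - a) * (-c) \<le> integral {a..b} f" by (rule int_lb[OF assms(1,2)]) (use assms(3) in \<open>force simp: abs_le_iff\<close>)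
  ultimately show ?thesis by (simp add: abs_le_iff)
qed

lemma int_split:
  fixes f :: "real \<Rightarrow> real"
  assumes "continuous_on {a..b} f" "a \<le> c" "c \<le> b"
  shows "integral {a..b} f = integral {a..c} f + integral {c..b} f"
  using Henstock_Kurzweil_Integration.integral_combine[OF assms(2,3) integrable_continuous_interval[OF assms(1)]] by simp

lemma tele: "(f n)^2 - (f 0)^2 = (\<Sum>k<n. 2 * f k * (f (Suc k) - f k) + (f (Suc k) - f k)^2)" for f :: "nat \<Rightarrow> real"
  by (induction n) (auto simp: power2_eq_square algebra_simps)

lemma x1x: "(x::real) * (1 - x) \<le> 1/4"
proof -
  have "0 \<le> (x - 1/2)^2" by simp
  then show ?thesis by (simp add: power2_eq_square algebra_simps)
qed

lemma var_bound:
  fixes X \<beta> Mx Qx :: "real \<Rightarrow> 'a \<Rightarrow> real"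
  assumes P: "prob_space M" and Fi: "is_filtration M F" and T: "0 < T" and B: "0 \<le> B"
    and Xc: "\<And>\<omega>. \<omega> \<in> space M \<Longrightarrow> continuous_on {0..} (\<lambda>t. X t \<omega>)"
    and bc: "\<And>\<omega>. \<omega> \<in> space M \<Longrightarrow> continuous_on {0..} (\<lambda>t. \<beta> t \<omega>)"
    and X01: "\<And>\<omega> t. \<omega> \<in> space M \<Longrightarrow> 0 \<le> t \<Longrightarrow> 0 \<le> X t \<omega> \<and> X t \<omega> \<le> 1"
    and bb: "\<And>\<omega> t. \<omega> \<in> space M \<Longrightarrow> 0 \<le> t \<Longrightarrow> \<bar>\<beta> t \<omega>\<bar> \<le> B"
    and XF: "\<And>t. 0 \<le> t \<Longrightarrow> X t \<in> borel_measurable (F t)"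
    and Mx_def: "\<And>t \<omega>. Mx t \<omega> = X t \<omega> - X 0 \<omega> - integral {0..t} (\<lambda>s. \<beta> s \<omega>)"
    and Qx_def: "\<And>t \<omega>. Qx t \<omega> = (X t \<omega>)^2 - (X 0 \<omega>)^2
                   - integral {0..t} (\<lambda>s. X s \<omega> * (1 - X s \<omega>) + 2 * X s \<omega> * \<beta> s \<omega>)"
    and mM: "mart M F Mx" and mQ: "mart M F Qx"
  shows "(\<integral>\<omega>. (Mx T \<omega>)^2 \<partial>M) \<le> T / 4"
proof -
  interpret prob_space M by fact
  have Xc': "continuous_on {a..b} (\<lambda>t. X t \<omega>)" if "\<omega> \<in> space M" "0 \<le> a" for a b \<omega>
    using continuous_on_subset[OF Xc[OF that(1)]] that(2) by auto
  have bc': "continuous_on {a..b} (\<lambda>t. \<beta> t \<omega>)" if "\<omega> \<in> space M" "0 \<le> a" for a b \<omega>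
    using continuous_on_subset[OF bc[OF that(1)]] that(2) by auto
  have Jc: "continuous_on {a..b} (\<lambda>s. X s \<omega> * (1 - X s \<omega>) + 2 * X s \<omega> * \<beta> s \<omega>)"
    if "\<omega> \<in> space M" "0 \<le> a" for a b \<omega>
    using Xc'[OF that] bc'[OF that] by (intro continuous_intros) auto
  have MxM: "Mx t \<in> borel_measurable M" if "0 \<le> t" for t
    using mM that meas_filt_M[OF Fi] unfolding mart_def by blast
  have QxM: "Qx t \<in> borel_measurable M" if "0 \<le> t" for t
    using mQ that meas_filt_M[OF Fi] unfolding mart_def by blast
  have QxI: "integrable M (Qx t)" if "0 \<le> t" for t
    using mQ that unfolding mart_def by blast
  have XM: "X t \<in> borel_measurable M" if "0 \<le> t" for t
    using XF[OF that] meas_filt_M[OF Fi] by blast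
  have Mxb: "\<bar>Mx t \<omega>\<bar> \<le> 1 + B * t" if "\<omega> \<in> space M" "0 \<le> t" for t \<omega>
  proof -
    have "\<bar>integral {0..t} (\<lambda>s. \<beta> s \<omega>)\<bar> \<le> (t - 0) * B"
      by (rule int_abs[OF bc'[OF that(1)]]) (use that bb in auto)
    moreover have "\<bar>X t \<omega> - X 0 \<omega>\<bar> \<le> 1" using X01[OF that(1), of t] X01[OF that(1), of 0] that by auto
    ultimately show ?thesis unfolding Mx_def by (simp add: mult.commute)
  qed
  have Mx0: "Mx 0 \<omega> = 0" for \<omega> unfolding Mx_def by simp
  have ib: "integrable M f" if "f \<in> borel_measurable M" "\<And>\<omega>. \<omega> \<in> space M \<Longrightarrow> \<bar>f \<omega>\<bar> \<le> C"
    for f :: "'a \<Rightarrow> real" and C :: real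
    using that by (intro integrable_const_bound[where B=C]) auto
  define tt where "tt n k = real k * T / real n" for n k :: nat
  define R where "R n \<omega> = (\<Sum>k<n. (Mx (tt n (Suc k)) \<omega> - Mx (tt n k) \<omega>)^2 - (Qx (tt n (Suc k)) \<omega> - Qx (tt n k) \<omega>)
        + 2 * X (tt n k) \<omega> * (Mx (tt n (Suc k)) \<omega> - Mx (tt n k) \<omega>))" for n \<omega>
  have tt0: "0 \<le> tt n k" for n k using T by (simp add: tt_def)
  have ttS: "tt n (Suc k) = tt n k + T / real n" for n k by (simp add: tt_def add_divide_distrib algebra_simps)
  have ttle: "k \<le> n \<Longrightarrow> 0 < n \<Longrightarrow> tt n k \<le> T" for n k using T by (simp add: tt_def field_simps mult_left_mono)
  have ttN: "0 < n \<Longrightarrow> tt n n = T" for n by (simp add: tt_def)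
  have ER: "(\<integral>\<omega>. (Mx T \<omega>)^2 \<partial>M) = (\<integral>\<omega>. R n \<omega> \<partial>M)" and RM: "R n \<in> borel_measurable M" and RI: "integrable M (R n)"
    if n: "0 < n" for n
  proof -
    define dM where "dM k \<omega> = Mx (tt n (Suc k)) \<omega> - Mx (tt n k) \<omega>" for k \<omega>
    define dQ where "dQ k \<omega> = Qx (tt n (Suc k)) \<omega> - Qx (tt n k) \<omega>" for k \<omega>
    define S1 where "S1 \<omega> = (\<Sum>k<n. 2 * (Mx (tt n k) \<omega> * dM k \<omega>) + dQ k \<omega> - 2 * (X (tt n k) \<omega> * dM k \<omega>))" for \<omega>
    have Req: "R n \<omega> = (Mx T \<omega>)^2 - S1 \<omega>" for \<omega>
    proof -
      have "(Mx (tt n n) \<omega>)^2 - (Mx (tt n 0) \<omega>)^2 = (\<Sum>k<n. 2 * Mx (tt n k) \<omega> * dM k \<omega> + (dM k \<omega>)^2)"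
        using tele[of "\<lambda>k. Mx (tt n k) \<omega>" n] unfolding dM_def by simp
      moreover have "tt n 0 = 0" by (simp add: tt_def)
      ultimately have "(Mx T \<omega>)^2 = (\<Sum>k<n. 2 * Mx (tt n k) \<omega> * dM k \<omega> + (dM k \<omega>)^2)"
        using ttN[OF n] Mx0 by simp
      then show ?thesis unfolding R_def S1_def dM_def[symmetric] dQ_def[symmetric]
        by (simp add: sum_subtractf[symmetric] algebra_simps)
    qed
    have Mtb: "\<bar>Mx (tt n k) \<omega>\<bar> \<le> 1 + B * T" if "\<omega> \<in> space M" "k \<le> n" for k \<omega>
    proof -
      have "B * tt n k \<le> B * T" using ttle[OF that(2) n] B by (simp add: mult_left_mono)
      then show ?thesis using Mxb[OF that(1) tt0[of n k]] by simp
    qed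
    have dMb: "\<bar>dM k \<omega>\<bar> \<le> 2 * (1 + B * T)" if "\<omega> \<in> space M" "k < n" for k \<omega>
      using Mtb[OF that(1), of k] Mtb[OF that(1), of "Suc k"] that(2) unfolding dM_def by simp
    have dMM: "dM k \<in> borel_measurable M" for k unfolding dM_def using MxM[OF tt0] by measurable
    have o1: "(\<integral>\<omega>. Mx (tt n k) \<omega> * dM k \<omega> \<partial>M) = 0" if "k < n" for k
    proof -
      have "tt n k \<le> tt n (Suc k)" using ttS T n by (simp add: field_simps)
      moreover have "Mx (tt n k) \<in> borel_measurable (F (tt n k))" using mM tt0 unfolding mart_def by blast
      ultimately show ?thesis unfolding dM_def
        using orth[OF P Fi mM tt0[of n k], of "tt n (Suc k)" "Mx (tt n k)" "1 + B * T"] Mtb that by simp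
    qed
    have o2: "(\<integral>\<omega>. X (tt n k) \<omega> * dM k \<omega> \<partial>M) = 0" if "k < n" for k
    proof -
      have "tt n k \<le> tt n (Suc k)" using ttS T n by (simp add: field_simps)
      then show ?thesis unfolding dM_def
        using orth[OF P Fi mM tt0[of n k], of "tt n (Suc k)" "X (tt n k)" 1] XF[OF tt0[of n k]] X01 tt0 by fastforce
    qed
    have o3: "(\<integral>\<omega>. dQ k \<omega> \<partial>M) = 0" if "k < n" for k
    proof -
      have "tt n k \<le> tt n (Suc k)" using ttS T n by (simp add: field_simps)
      then show ?thesis unfolding dQ_def
        using orth[OF P Fi mQ tt0[of n k], of "tt n (Suc k)" "\<lambda>_. 1" 1] by simp
    qed
    have i1: "integrable M (\<lambda>\<omega>. Mx (tt n k) \<omega> * dM k \<omega>)" if "k < n" for k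
    proof (rule ib[of _ "(1 + B * T) * (2 * (1 + B * T))"])
      show "(\<lambda>\<omega>. Mx (tt n k) \<omega> * dM k \<omega>) \<in> borel_measurable M" using MxM[OF tt0] dMM by measurable
      fix \<omega> assume om: "\<omega> \<in> space M"
      show "\<bar>Mx (tt n k) \<omega> * dM k \<omega>\<bar> \<le> (1 + B * T) * (2 * (1 + B * T))"
        unfolding abs_mult using Mtb[OF om, of k] dMb[OF om that] that by (intro mult_mono) auto
    qed
    have i2: "integrable M (\<lambda>\<omega>. X (tt n k) \<omega> * dM k \<omega>)" if "k < n" for k
    proof (rule ib[of _ "1 * (2 * (1 + B * T))"])
      show "(\<lambda>\<omega>. X (tt n k) \<omega> * dM k \<omega>) \<in> borel_measurable M" using XM[OF tt0] dMM by measurable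
      fix \<omega> assume om: "\<omega> \<in> space M"
      show "\<bar>X (tt n k) \<omega> * dM k \<omega>\<bar> \<le> 1 * (2 * (1 + B * T))"
        unfolding abs_mult using X01[OF om tt0[of n k]] dMb[OF om that] by (intro mult_mono) auto
    qed
    have i3: "integrable M (dQ k)" for k unfolding dQ_def using QxI[OF tt0] by auto
    have iS1: "integrable M S1" unfolding S1_def
      by (rule Bochner_Integration.integrable_sum) (use i1 i2 i3 in auto)
    have eS1: "(\<integral>\<omega>. S1 \<omega> \<partial>M) = 0" unfolding S1_def
      using i1 i2 i3 o1 o2 o3 by (simp add: Bochner_Integration.integral_sum)
    have iT: "integrable M (\<lambda>\<omega>. (Mx T \<omega>)^2)"
    proof (rule ib[of _ "(1 + B * T) * (1 + B * T)"])
      show "(\<lambda>\<omega>. (Mx T \<omega>)^2) \<in> borel_measurable M" using MxM[of T] T by simp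
      fix \<omega> assume om: "\<omega> \<in> space M"
      show "\<bar>(Mx T \<omega>)^2\<bar> \<le> (1 + B * T) * (1 + B * T)" using sq_bound Mxb[OF om] T by auto
    qed
    have "(\<integral>\<omega>. R n \<omega> \<partial>M) = (\<integral>\<omega>. (Mx T \<omega>)^2 \<partial>M) - (\<integral>\<omega>. S1 \<omega> \<partial>M)"
      unfolding Req using iT iS1 by simp
    then show "(\<integral>\<omega>. (Mx T \<omega>)^2 \<partial>M) = (\<integral>\<omega>. R n \<omega> \<partial>M)" using eS1 by simp
    have "(\<lambda>\<omega>. (Mx T \<omega>)^2 - S1 \<omega>) \<in> borel_measurable M" using iT iS1 by measurable
    then show "R n \<in> borel_measurable M" unfolding Req .
    show "integrable M (R n)" unfolding Req using iT iS1 by simp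
  qed
  have Rb: "R n \<omega> \<le> T / 4 + 2 * \<epsilon> * B * T + B^2 * T^2 / real n"
    if om: "\<omega> \<in> space M" and n: "0 < n" and ep: "0 \<le> \<epsilon>"
      and uc: "\<And>s u. s \<in> {0..T} \<Longrightarrow> u \<in> {0..T} \<Longrightarrow> \<bar>s - u\<bar> \<le> T / real n \<Longrightarrow> \<bar>X s \<omega> - X u \<omega>\<bar> \<le> \<epsilon>"
    for n \<omega> \<epsilon>
  proof -
    define \<Delta> where "\<Delta> = T / real n"
    have D0: "0 < \<Delta>" using T n by (simp add: \<Delta>_def)
    have trm: "(Mx (tt n (Suc k)) \<omega> - Mx (tt n k) \<omega>)^2 - (Qx (tt n (Suc k)) \<omega> - Qx (tt n k) \<omega>)
        + 2 * X (tt n k) \<omega> * (Mx (tt n (Suc k)) \<omega> - Mx (tt n k) \<omega>) \<le> \<Delta> * (1/4 + 2 * \<epsilon> * B) + \<Delta>^2 * B^2"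
      if k: "k < n" for k
    proof -
      define t where "t = tt n k"
      define t' where "t' = tt n (Suc k)"
      have t0: "0 \<le> t" using tt0 by (simp add: t_def)
      have tt': "t' = t + \<Delta>" unfolding t_def t'_def \<Delta>_def by (rule ttS)
      have t'T: "t' \<le> T" unfolding t'_def using ttle[of "Suc k" n] k n by simp
      define I where "I = integral {t..t'} (\<lambda>s. \<beta> s \<omega>)"
      define J where "J = integral {t..t'} (\<lambda>s. X s \<omega> * (1 - X s \<omega>) + 2 * X s \<omega> * \<beta> s \<omega>)"
      define a where "a = X t \<omega>"
      define a' where "a' = X t' \<omega>"
      have dM: "Mx t' \<omega> - Mx t \<omega> = a' - a - I"
        unfolding Mx_def a_def a'_def I_def
        using int_split[OF bc'[OF om order_refl], of t t'] t0 tt' D0 by simp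
      have dQ: "Qx t' \<omega> - Qx t \<omega> = a'^2 - a^2 - J"
        unfolding Qx_def a_def a'_def J_def
        using int_split[OF Jc[OF om order_refl], of t t'] t0 tt' D0 by simp
      have Ib: "\<bar>I\<bar> \<le> (t' - t) * B" unfolding I_def
        by (rule int_abs[OF bc'[OF om t0]]) (use tt' D0 bb[OF om] t0 in auto)
      have I2: "I^2 \<le> \<Delta>^2 * B^2"
      proof -
        have "\<bar>I\<bar> \<le> \<Delta> * B" using Ib tt' by simp
        then have "\<bar>I\<bar>^2 \<le> (\<Delta> * B)^2" by (rule power_mono) simp
        then show ?thesis by (simp add: power_mult_distrib)
      qed
      have JI: "J - 2 * a' * I = integral {t..t'} (\<lambda>s. X s \<omega> * (1 - X s \<omega>) + 2 * (X s \<omega> - a') * \<beta> s \<omega>)"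
      proof -
        have i1: "(\<lambda>s. X s \<omega> * (1 - X s \<omega>) + 2 * X s \<omega> * \<beta> s \<omega>) integrable_on {t..t'}"
          by (rule integrable_continuous_interval[OF Jc[OF om t0]])
        have i2: "(\<lambda>s. \<beta> s \<omega>) integrable_on {t..t'}"
          by (rule integrable_continuous_interval[OF bc'[OF om t0]])
        have "J - 2 * a' * I = integral {t..t'} (\<lambda>s. X s \<omega> * (1 - X s \<omega>) + 2 * X s \<omega> * \<beta> s \<omega>)
              - integral {t..t'} (\<lambda>s. 2 * a' * \<beta> s \<omega>)"
          unfolding J_def I_def by simp
        also have "\<dots> = integral {t..t'} (\<lambda>s. X s \<omega> * (1 - X s \<omega>) + 2 * X s \<omega> * \<beta> s \<omega> - 2 * a' * \<beta> s \<omega>)"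
          by (rule integral_diff[symmetric]) (use i1 i2 in \<open>auto intro: integrable_on_mult_right\<close>)
        finally show ?thesis by (simp add: algebra_simps)
      qed
      have JIb: "J - 2 * a' * I \<le> (t' - t) * (1/4 + 2 * \<epsilon> * B)" unfolding JI
      proof (rule int_ub)
        show "continuous_on {t..t'} (\<lambda>s. X s \<omega> * (1 - X s \<omega>) + 2 * (X s \<omega> - a') * \<beta> s \<omega>)"
          using Xc'[OF om t0] bc'[OF om t0] by (intro continuous_intros) auto
        show "t \<le> t'" using tt' D0 by simp
        fix s assume s: "s \<in> {t..t'}"
        have s0: "0 \<le> s" using s t0 by simp
        have "\<bar>X s \<omega> - a'\<bar> \<le> \<epsilon>" unfolding a'_def
          by (rule uc) (use s t0 t'T tt' \<Delta>_def in auto)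
        then have "2 * (X s \<omega> - a') * \<beta> s \<omega> \<le> 2 * (\<epsilon> * B)"
          using bb[OF om s0] ep
          by (metis (no_types, opaque_lifting) abs_ge_zero abs_le_D1 abs_mult mult.assoc mult_le_cancel_left_pos mult_mono zero_less_numeral)
        then show "X s \<omega> * (1 - X s \<omega>) + 2 * (X s \<omega> - a') * \<beta> s \<omega> \<le> 1 / 4 + 2 * \<epsilon> * B"
          using x1x[of "X s \<omega>"] by simp
      qed
      have "(Mx t' \<omega> - Mx t \<omega>)^2 - (Qx t' \<omega> - Qx t \<omega>) + 2 * X t \<omega> * (Mx t' \<omega> - Mx t \<omega>)
            = (J - 2 * a' * I) + I^2"
        unfolding dM dQ a_def[symmetric] by (simp add: power2_eq_square algebra_simps)
      also have "\<dots> \<le> \<Delta> * (1/4 + 2 * \<epsilon> * B) + \<Delta>^2 * B^2" using JIb I2 tt' by simp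
      finally show ?thesis unfolding t_def t'_def .
    qed
    have "R n \<omega> \<le> (\<Sum>k<n. \<Delta> * (1/4 + 2 * \<epsilon> * B) + \<Delta>^2 * B^2)"
      unfolding R_def by (rule sum_mono) (use trm in auto)
    also have "\<dots> = T / 4 + 2 * \<epsilon> * B * T + B^2 * T^2 / real n"
      using n by (simp add: \<Delta>_def power2_eq_square field_simps)
    finally show ?thesis .
  qed
  define C where "C = T / 4 + 2 * B * T + B^2 * T^2"
  have RC: "R n \<omega> \<le> C" if om: "\<omega> \<in> space M" and n: "0 < n" for n \<omega>
  proof -
    have "R n \<omega> \<le> T / 4 + 2 * 1 * B * T + B^2 * T^2 / real n"
    proof (rule Rb[OF om n])
      fix s u assume "s \<in> {0..T}" "u \<in> {0..T}"
      then show "\<bar>X s \<omega> - X u \<omega>\<bar> \<le> 1" using X01[OF om, of s] X01[OF om, of u] by auto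
    qed simp
    moreover have "B^2 * T^2 / real n \<le> B^2 * T^2"
    proof -
      have n1: "1 \<le> real n" using n by simp
      have "B^2 * T^2 * 1 \<le> B^2 * T^2 * real n" by (rule mult_left_mono[OF n1]) simp
      then show ?thesis using n by (simp add: pos_divide_le_eq)
    qed
    ultimately show ?thesis unfolding C_def by simp
  qed
  define E where "E = (\<integral>\<omega>. (Mx T \<omega>)^2 \<partial>M)"
  have EC: "E \<le> C"
  proof -
    have "E = (\<integral>\<omega>. R 1 \<omega> \<partial>M)" unfolding E_def by (rule ER) simp
    also have "\<dots> \<le> (\<integral>\<omega>. C \<partial>M)"
      by (rule integral_mono) (use RI[of 1] RC in auto)
    finally show ?thesis by (simp add: prob_space)
  qed
  define g where "g n \<omega> = ennreal (C - R n \<omega>)" for n \<omega>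
  have gM: "g n \<in> borel_measurable M" for n
  proof (cases "n = 0")
    case True
    have "R 0 = (\<lambda>\<omega>. 0)" unfolding R_def by auto
    then show ?thesis unfolding g_def True by simp
  next
    case False
    then have "R n \<in> borel_measurable M" using RM by simp
    then show ?thesis unfolding g_def by measurable
  qed
  have gI: "integral\<^sup>N M (g n) = ennreal (C - E)" if "0 < n" for n
  proof -
    have "integral\<^sup>N M (g n) = ennreal (\<integral>\<omega>. C - R n \<omega> \<partial>M)"
      unfolding g_def by (rule nn_integral_eq_integral) (use RI[OF that] RC that in \<open>auto intro!: AE_I2\<close>)
    also have "(\<integral>\<omega>. C - R n \<omega> \<partial>M) = C - E"
      using RI[OF that] ER[OF that] by (simp add: E_def prob_space)
    finally show ?thesis .
  qed
  have liminf_int: "liminf (\<lambda>n. integral\<^sup>N M (g n)) = ennreal (C - E)"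
  proof (rule lim_imp_Liminf)
    show "(\<lambda>n. integral\<^sup>N M (g n)) \<longlonglongrightarrow> ennreal (C - E)"
      by (rule tendsto_eventually) (use gI in \<open>auto simp: eventually_sequentially intro: exI[of _ 1]\<close>)
  qed simp
  have pw: "ennreal (C - T / 4) \<le> liminf (\<lambda>n. g n \<omega>)" if om: "\<omega> \<in> space M" for \<omega>
  proof (subst le_Liminf_iff, intro allI impI)
    fix y assume y: "y < ennreal (C - T / 4)"
    obtain r where r: "y = ennreal r" "0 \<le> r"
      using y by (cases y rule: ennreal_cases) auto
    have rC: "r < C - T / 4" using y r by (simp add: ennreal_less_iff)
    define \<eta> where "\<eta> = C - T / 4 - r"
    have eta: "0 < \<eta>" using rC by (simp add: \<eta>_def)
    define \<epsilon> where "\<epsilon> = \<eta> / (4 * (B * T + 1))"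
    have BT: "0 \<le> B * T" using B T by simp
    have ep: "0 < \<epsilon>" using eta BT by (simp add: \<epsilon>_def)
    have ep2: "2 * \<epsilon> * B * T \<le> \<eta> / 2"
    proof -
      have BT1: "B * T + 1 \<noteq> 0" using BT by simp
      have "2 * \<epsilon> * B * T = \<eta> * (B * T) / (2 * (B * T + 1))" unfolding \<epsilon>_def using BT1 by (simp add: field_simps)
      also have "\<dots> \<le> \<eta> * (B * T + 1) / (2 * (B * T + 1))"
        using eta BT by (intro divide_right_mono mult_left_mono) auto
      also have "\<dots> = \<eta> / 2" using BT1 by (simp add: field_simps)
      finally show ?thesis .
    qed
    have "uniformly_continuous_on {0..T} (\<lambda>t. X t \<omega>)"
      by (rule compact_uniformly_continuous[OF Xc'[OF om order_refl]]) simp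
    then obtain \<delta> where d: "0 < \<delta>" and dd: "\<And>s u. s \<in> {0..T} \<Longrightarrow> u \<in> {0..T} \<Longrightarrow> dist u s < \<delta> \<Longrightarrow> dist (X u \<omega>) (X s \<omega>) < \<epsilon>"
      unfolding uniformly_continuous_on_def using ep by metis
    obtain N1 :: nat where N1: "T / \<delta> < real N1" using reals_Archimedean2 by blast
    obtain N2 :: nat where N2: "2 * B^2 * T^2 / \<eta> < real N2" using reals_Archimedean2 by blast
    show "\<forall>\<^sub>F n in sequentially. y < g n \<omega>"
      unfolding eventually_sequentially
    proof (intro exI[of _ "N1 + N2 + 1"] allI impI)
      fix n assume nN: "N1 + N2 + 1 \<le> n"
      have n: "0 < n" using nN by simp
      have npos: "0 < real n" using n by simp
      have Tn: "T / real n < \<delta>"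
      proof -
        have "T / \<delta> < real n" using N1 nN by linarith
        then have "T < \<delta> * real n" using d by (simp add: divide_less_eq mult.commute)
        then show ?thesis using npos by (simp add: divide_less_eq mult.commute)
      qed
      have BTn: "B^2 * T^2 / real n < \<eta> / 2"
      proof -
        have "2 * B^2 * T^2 / \<eta> < real n" using N2 nN by linarith
        then have "2 * B^2 * T^2 < real n * \<eta>" using eta by (simp add: divide_less_eq)
        then show ?thesis using npos by (simp add: divide_less_eq field_simps)
      qed
      have "R n \<omega> \<le> T / 4 + 2 * \<epsilon> * B * T + B^2 * T^2 / real n"
      proof (rule Rb[OF om n])
        fix s u assume su: "s \<in> {0..T}" "u \<in> {0..T}" "\<bar>s - u\<bar> \<le> T / real n"
        then have "dist u s < \<delta>" using Tn by (simp add: dist_real_def abs_minus_commute)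
        then have "dist (X u \<omega>) (X s \<omega>) < \<epsilon>" using dd su by blast
        then show "\<bar>X s \<omega> - X u \<omega>\<bar> \<le> \<epsilon>" by (simp add: dist_real_def abs_minus_commute)
      qed (use ep in simp)
      then have "r < C - R n \<omega>" using ep2 BTn by (simp add: \<eta>_def)
      then show "y < g n \<omega>" unfolding g_def r(1) using r(2) by (simp add: ennreal_less_iff)
    qed
  qed
  have "ennreal (C - T / 4) = (\<integral>\<^sup>+\<omega>. ennreal (C - T / 4) \<partial>M)"
    by (simp add: emeasure_space_1)
  also have "\<dots> \<le> (\<integral>\<^sup>+\<omega>. liminf (\<lambda>n. g n \<omega>) \<partial>M)"
    by (rule nn_integral_mono) (use pw in auto)
  also have "\<dots> \<le> liminf (\<lambda>n. integral\<^sup>N M (g n))"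
    by (rule nn_integral_liminf) (rule gM)
  finally have "ennreal (C - T / 4) \<le> ennreal (C - E)" using liminf_int by simp
  then have "C - T / 4 \<le> C - E" using EC by (simp add: ennreal_le_iff)
  then show ?thesis unfolding E_def by simp
qed



lemma stay_nonneg:
  fixes \<phi> :: "real \<Rightarrow> real"
  assumes c: "continuous_on {0..} \<phi>" and p0: "0 < \<phi> 0"
    and der: "\<And>s. 0 < s \<Longrightarrow> \<phi> s = 0 \<Longrightarrow> \<exists>l>0. (\<phi> has_real_derivative l) (at s within {0..})"
    and t: "0 \<le> t"
  shows "0 \<le> \<phi> t"
proof (rule ccontr)
  assume neg: "\<not> 0 \<le> \<phi> t"
  define S where "S = {0..t} \<inter> \<phi> -` {0..}"
  have ct: "continuous_on {0..t} \<phi>" using continuous_on_subset[OF c] by auto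
  have clS: "closed S" unfolding S_def by (rule continuous_closed_preimage[OF ct]) auto
  have S0: "0 \<in> S" using p0 t by (simp add: S_def)
  have bS: "bdd_above S" unfolding S_def by (auto intro: bdd_aboveI[of _ t])
  define s where "s = Sup S"
  have sS: "s \<in> S" unfolding s_def by (rule closed_contains_Sup) (use S0 bS clS in auto)
  have s_ub: "r \<in> S \<Longrightarrow> r \<le> s" for r unfolding s_def using bS by (simp add: cSup_upper)
  have s0: "0 \<le> s" "s \<le> t" "0 \<le> \<phi> s" using sS by (auto simp: S_def)
  have st: "s < t" using s0 neg by (metis order_le_less)
  obtain r where r: "s \<le> r" "r \<le> t" "\<phi> r = 0"
    using IVT2'[of \<phi> t 0 s] s0 neg continuous_on_subset[OF ct, of "{s..t}"] by auto
  have "r \<in> S" using r s0 by (simp add: S_def)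
  then have "r = s" using s_ub r by force
  then have phis: "\<phi> s = 0" using r by simp
  have spos: "0 < s" using phis p0 s0 by (metis order_le_less)
  obtain l where l: "0 < l" "(\<phi> has_real_derivative l) (at s within {0..})" using der[OF spos phis] by blast
  have "at s within {0..} = at s"
    by (rule at_within_interior) (use spos in simp)
  then have "(\<phi> has_real_derivative l) (at s)" using l by simp
  then obtain d where d: "0 < d" "\<And>h. 0 < h \<Longrightarrow> h < d \<Longrightarrow> \<phi> s < \<phi> (s + h)"
    using DERIV_pos_inc_right[of \<phi> l s] l(1) by blast
  define h where "h = min (d / 2) ((t - s) / 2)"
  have h3: "h \<le> (t - s) / 2" unfolding h_def by (rule min.cobounded2)
  have h: "0 < h" "h < d" "s + h \<le> t" using d st h3 by (auto simp: h_def)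
  have "s + h \<in> S" using d(2)[OF h(1,2)] phis h s0 by (simp add: S_def)
  then show False using s_ub h by force
qed

lemma stay_below1:
  fixes \<phi> k :: "real \<Rightarrow> real"
  assumes der: "\<And>s. 0 \<le> s \<Longrightarrow> (\<phi> has_real_derivative (1 - \<phi> s) * k s) (at s within {0..})"
    and kc: "continuous_on {0..} k" and p0: "\<phi> 0 < 1" and t: "0 \<le> t"
  shows "\<phi> t < 1"
proof -
  define G where "G u = integral {0..u} k" for u
  define h where "h u = (1 - \<phi> u) * exp (G u)" for u
  have kct: "continuous_on {0..t} k" using continuous_on_subset[OF kc] by auto
  have hd: "(h has_real_derivative 0) (at u within {0..t})" if u: "u \<in> {0..t}" for u
  proof -
    have dG: "(G has_real_derivative k u) (at u within {0..t})"
      unfolding G_def by (rule integral_has_real_derivative[OF kct u])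
    have dphi: "(\<phi> has_real_derivative (1 - \<phi> u) * k u) (at u within {0..t})"
      using has_field_derivative_subset[OF der] u by auto
    have d1: "((\<lambda>u. 1 - \<phi> u) has_real_derivative - ((1 - \<phi> u) * k u)) (at u within {0..t})"
      using DERIV_diff[OF DERIV_const dphi] by simp
    have d2: "((\<lambda>u. exp (G u)) has_real_derivative exp (G u) * k u) (at u within {0..t})"
      using DERIV_chain2[OF DERIV_exp dG] by simp
    have "(h has_real_derivative (- ((1 - \<phi> u) * k u)) * exp (G u) + (exp (G u) * k u) * (1 - \<phi> u)) (at u within {0..t})"
      unfolding h_def by (rule DERIV_mult[OF d1 d2])
    then show ?thesis by (simp add: algebra_simps)
  qed
  have "((\<lambda>_. 0) has_integral (h t - h 0)) {0..t}"
    by (rule fundamental_theorem_of_calculus[OF t]) (use hd in \<open>auto simp: has_real_derivative_iff_has_vector_derivative\<close>)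
  then have "h t = h 0" using has_integral_unique[OF _ has_integral_0] by force
  then have "(1 - \<phi> t) * exp (G t) = 1 - \<phi> 0" by (simp add: h_def G_def)
  then have "0 < (1 - \<phi> t) * exp (G t)" using p0 by simp
  then show ?thesis by (simp add: zero_less_mult_iff)
qed

definition bX :: "nat \<Rightarrow> real \<Rightarrow> real \<times> real \<Rightarrow> real" where
  "bX N \<mu> z = 2 * real N * (1 - fst z) * (\<mu> - (fst z)^2 * (snd z)^2)"
definition bY :: "nat \<Rightarrow> real \<Rightarrow> real \<times> real \<Rightarrow> real" where
  "bY N \<mu> z = 2 * real N * (1 - snd z) * (\<mu> - (fst z)^2 * (snd z)^2)"

lemma bX_cont: "continuous_on S f \<Longrightarrow> continuous_on S (\<lambda>s. bX N \<mu> (f s))"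
  unfolding bX_def by (intro continuous_intros) auto
lemma bY_cont: "continuous_on S f \<Longrightarrow> continuous_on S (\<lambda>s. bY N \<mu> (f s))"
  unfolding bY_def by (intro continuous_intros) auto

lemma comp_deriv:
  assumes "(w has_vector_derivative (a, b)) F"
  shows "((\<lambda>t. fst (w t)) has_real_derivative a) F" "((\<lambda>t. snd (w t)) has_real_derivative b) F"
proof -
  have "((\<lambda>t. fst (w t)) has_derivative (\<lambda>h. fst (h *\<^sub>R (a, b)))) F"
    using assms unfolding has_vector_derivative_def by (rule has_derivative_fst)
  then show "((\<lambda>t. fst (w t)) has_real_derivative a) F"
    by (simp add: has_real_derivative_iff_has_vector_derivative has_vector_derivative_def)
  have "((\<lambda>t. snd (w t)) has_derivative (\<lambda>h. snd (h *\<^sub>R (a, b)))) F"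
    using assms unfolding has_vector_derivative_def by (rule has_derivative_snd)
  then show "((\<lambda>t. snd (w t)) has_real_derivative b) F"
    by (simp add: has_real_derivative_iff_has_vector_derivative has_vector_derivative_def)
qed

lemma ftc_real:
  fixes f f' :: "real \<Rightarrow> real"
  assumes d: "\<And>s. 0 \<le> s \<Longrightarrow> (f has_real_derivative f' s) (at s within {0..})" and t: "0 \<le> t"
  shows "f t = f 0 + integral {0..t} f'"
proof -
  have "(f' has_integral (f t - f 0)) {0..t}"
    by (rule fundamental_theorem_of_calculus[OF t])
       (use d in \<open>auto simp: has_real_derivative_iff_has_vector_derivative[symmetric] intro!: has_field_derivative_subset[OF d]\<close>)
  then show ?thesis by (simp add: integral_unique)
qed

lemma ode_facts:
  assumes ode: "ode_sol_L1 N \<mu> (x0, y0) w" and N: "1 \<le> N" and mu: "0 < \<mu>"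
    and x0: "0 < x0" "x0 < 1" and y0: "0 < y0" "y0 < 1"
  shows "continuous_on {0..} w"
    and "\<And>t. 0 \<le> t \<Longrightarrow> fst (w t) = x0 + integral {0..t} (\<lambda>s. bX N \<mu> (w s))"
    and "\<And>t. 0 \<le> t \<Longrightarrow> snd (w t) = y0 + integral {0..t} (\<lambda>s. bY N \<mu> (w s))"
    and "\<And>t. 0 \<le> t \<Longrightarrow> w t \<in> {0..1} \<times> {0..1}"
proof -
  have w0: "w 0 = (x0, y0)" using ode unfolding ode_sol_L1_def by simp
  have der: "(w has_vector_derivative (bX N \<mu> (w t), bY N \<mu> (w t))) (at t within {0..})" if "0 \<le> t" for t
    using ode that unfolding ode_sol_L1_def bX_def bY_def by simp
  show wc: "continuous_on {0..} w"
    unfolding continuous_on_eq_continuous_within using der has_vector_derivative_continuous by fastforce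
  have dx: "((\<lambda>t. fst (w t)) has_real_derivative bX N \<mu> (w t)) (at t within {0..})" if "0 \<le> t" for t
    using comp_deriv(1)[OF der[OF that]] .
  have dy: "((\<lambda>t. snd (w t)) has_real_derivative bY N \<mu> (w t)) (at t within {0..})" if "0 \<le> t" for t
    using comp_deriv(2)[OF der[OF that]] .
  show "fst (w t) = x0 + integral {0..t} (\<lambda>s. bX N \<mu> (w s))" if "0 \<le> t" for t
    using ftc_real[OF dx that] w0 by simp
  show "snd (w t) = y0 + integral {0..t} (\<lambda>s. bY N \<mu> (w s))" if "0 \<le> t" for t
    using ftc_real[OF dy that] w0 by simp
  define k where "k s = 2 * real N * (\<mu> - (fst (w s))^2 * (snd (w s))^2)" for s
  have kc: "continuous_on {0..} k" unfolding k_def using wc by (intro continuous_intros) auto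
  have wxc: "continuous_on {0..} (\<lambda>t. fst (w t))" using wc by (intro continuous_intros)
  have wyc: "continuous_on {0..} (\<lambda>t. snd (w t))" using wc by (intro continuous_intros)
  have Npos: "0 < real N" using N by simp
  fix t :: real assume t: "0 \<le> t"
  have "fst (w t) < 1"
    by (rule stay_below1[OF _ kc _ t]) (use dx w0 x0 in \<open>auto simp: bX_def k_def algebra_simps\<close>)
  moreover have "snd (w t) < 1"
    by (rule stay_below1[OF _ kc _ t]) (use dy w0 y0 in \<open>auto simp: bY_def k_def algebra_simps\<close>)
  moreover have "0 \<le> fst (w t)"
  proof (rule stay_nonneg[OF wxc _ _ t])
    show "0 < fst (w 0)" using w0 x0 by simp
    fix s :: real assume s: "0 < s" "fst (w s) = 0"
    then show "\<exists>l>0. ((\<lambda>t. fst (w t)) has_real_derivative l) (at s within {0..})"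
      using dx[of s] mu Npos by (intro exI[of _ "2 * real N * \<mu>"]) (auto simp: bX_def)
  qed
  moreover have "0 \<le> snd (w t)"
  proof (rule stay_nonneg[OF wyc _ _ t])
    show "0 < snd (w 0)" using w0 y0 by simp
    fix s :: real assume s: "0 < s" "snd (w s) = 0"
    then show "\<exists>l>0. ((\<lambda>t. snd (w t)) has_real_derivative l) (at s within {0..})"
      using dy[of s] mu Npos by (intro exI[of _ "2 * real N * \<mu>"]) (auto simp: bY_def)
  qed
  ultimately show "w t \<in> {0..1} \<times> {0..1}" by (auto simp: mem_Times_iff)
qed



lemma lip_p:
  fixes a b c d :: real
  assumes "0 \<le> a" "a \<le> 1" "0 \<le> b" "b \<le> 1" "0 \<le> c" "c \<le> 1" "0 \<le> d" "d \<le> 1"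
  shows "\<bar>a^2 * b^2 - c^2 * d^2\<bar> \<le> 2 * \<bar>a - c\<bar> + 2 * \<bar>b - d\<bar>"
proof -
  have e: "a^2 * b^2 - c^2 * d^2 = (a - c) * ((a + c) * b^2) + (b - d) * ((b + d) * c^2)"
    by (simp add: power2_eq_square algebra_simps)
  have b2: "b^2 \<le> 1" "c^2 \<le> 1" using assms by (simp_all add: power_le_one)
  have "(a + c) * b^2 \<le> 2 * 1" using assms b2 by (intro mult_mono) auto
  then have "\<bar>(a + c) * b^2\<bar> \<le> 2" using assms by simp
  moreover have "(b + d) * c^2 \<le> 2 * 1" using assms b2 by (intro mult_mono) auto
  then have "\<bar>(b + d) * c^2\<bar> \<le> 2" using assms by simp
  ultimately have "\<bar>(a - c) * ((a + c) * b^2)\<bar> \<le> \<bar>a - c\<bar> * 2" "\<bar>(b - d) * ((b + d) * c^2)\<bar> \<le> \<bar>b - d\<bar> * 2"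
    by (simp_all only: abs_mult, intro mult_left_mono, simp_all)+
  then show ?thesis unfolding e using abs_triangle_ineq[of "(a - c) * ((a + c) * b^2)" "(b - d) * ((b + d) * c^2)"] by linarith
qed

lemma lin3: "(X::real) \<le> A + P \<Longrightarrow> P \<le> 2 * A + 2 * B \<Longrightarrow> 0 \<le> B \<Longrightarrow> X \<le> 3 * (A + B)"
  by (simp add: distrib_left)

lemma lip_b:
  assumes mu: "0 < \<mu>" "\<mu> < 1" and z: "z \<in> {0..1} \<times> {0..1}" and z': "z' \<in> {0..1} \<times> {0..1}"
  shows "\<bar>bX N \<mu> z - bX N \<mu> z'\<bar> \<le> 6 * real N * (\<bar>fst z - fst z'\<bar> + \<bar>snd z - snd z'\<bar>)"
    and "\<bar>bY N \<mu> z - bY N \<mu> z'\<bar> \<le> 6 * real N * (\<bar>fst z - fst z'\<bar> + \<bar>snd z - snd z'\<bar>)"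
proof -
  obtain a b where ab: "z = (a, b)" by (cases z)
  obtain c d where cd: "z' = (c, d)" by (cases z')
  have r: "0 \<le> a" "a \<le> 1" "0 \<le> b" "b \<le> 1" "0 \<le> c" "c \<le> 1" "0 \<le> d" "d \<le> 1"
    using z z' ab cd by auto
  define p where "p = a^2 * b^2"
  define q where "q = c^2 * d^2"
  have p01: "0 \<le> p" "p \<le> 1" using r by (auto simp: p_def power_le_one mult_le_one)
  have q01: "0 \<le> q" "q \<le> 1" using r by (auto simp: q_def power_le_one mult_le_one)
  have pq: "\<bar>p - q\<bar> \<le> 2 * \<bar>a - c\<bar> + 2 * \<bar>b - d\<bar>" unfolding p_def q_def by (rule lip_p[OF r])
  have mp: "\<bar>\<mu> - p\<bar> \<le> 1" using p01 mu by auto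
  have gen: "\<bar>(1 - u) * (\<mu> - p) - (1 - v) * (\<mu> - q)\<bar> \<le> \<bar>u - v\<bar> + \<bar>p - q\<bar>"
    if "0 \<le> v" "v \<le> 1" for u v :: real
  proof -
    have "(1 - u) * (\<mu> - p) - (1 - v) * (\<mu> - q) = (v - u) * (\<mu> - p) + (1 - v) * (q - p)"
      by (simp add: algebra_simps)
    moreover have "\<bar>(v - u) * (\<mu> - p)\<bar> \<le> \<bar>u - v\<bar>"
      using mp by (simp add: abs_mult abs_minus_commute mult_left_le)
    moreover have "\<bar>(1 - v) * (q - p)\<bar> \<le> \<bar>p - q\<bar>"
      using that by (simp add: abs_mult abs_minus_commute mult_left_le_one_le)
    ultimately show ?thesis using abs_triangle_ineq[of "(v - u) * (\<mu> - p)" "(1 - v) * (q - p)"] by linarith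
  qed
  have N0: "0 \<le> real N" by simp
  have "bX N \<mu> z - bX N \<mu> z' = 2 * real N * ((1 - a) * (\<mu> - p) - (1 - c) * (\<mu> - q))"
    unfolding bX_def ab cd p_def q_def by (simp add: algebra_simps)
  then have "\<bar>bX N \<mu> z - bX N \<mu> z'\<bar> = 2 * real N * \<bar>(1 - a) * (\<mu> - p) - (1 - c) * (\<mu> - q)\<bar>"
    by (simp add: abs_mult)
  also have "\<dots> \<le> 2 * real N * (3 * (\<bar>a - c\<bar> + \<bar>b - d\<bar>))"
  proof (rule mult_left_mono)
    show "\<bar>(1 - a) * (\<mu> - p) - (1 - c) * (\<mu> - q)\<bar> \<le> 3 * (\<bar>a - c\<bar> + \<bar>b - d\<bar>)"
      by (rule lin3[OF gen[of c a, OF r(5,6)] pq abs_ge_zero])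
  qed simp
  finally show "\<bar>bX N \<mu> z - bX N \<mu> z'\<bar> \<le> 6 * real N * (\<bar>fst z - fst z'\<bar> + \<bar>snd z - snd z'\<bar>)"
    using ab cd by (simp add: algebra_simps)
  have "bY N \<mu> z - bY N \<mu> z' = 2 * real N * ((1 - b) * (\<mu> - p) - (1 - d) * (\<mu> - q))"
    unfolding bY_def ab cd p_def q_def by (simp add: algebra_simps)
  then have "\<bar>bY N \<mu> z - bY N \<mu> z'\<bar> = 2 * real N * \<bar>(1 - b) * (\<mu> - p) - (1 - d) * (\<mu> - q)\<bar>"
    by (simp add: abs_mult)
  also have "\<dots> \<le> 2 * real N * (3 * (\<bar>a - c\<bar> + \<bar>b - d\<bar>))"
  proof (rule mult_left_mono)
    show "\<bar>(1 - b) * (\<mu> - p) - (1 - d) * (\<mu> - q)\<bar> \<le> 3 * (\<bar>a - c\<bar> + \<bar>b - d\<bar>)"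
      using lin3[OF gen[of d b, OF r(7,8)], of "\<bar>a - c\<bar>"] pq abs_ge_zero[of "a - c"] by (simp add: abs_minus_commute add.commute)
  qed simp
  finally show "\<bar>bY N \<mu> z - bY N \<mu> z'\<bar> \<le> 6 * real N * (\<bar>fst z - fst z'\<bar> + \<bar>snd z - snd z'\<bar>)"
    using ab cd by (simp add: algebra_simps)
qed

lemma gronwall:
  fixes u :: "real \<Rightarrow> real"
  assumes uc: "continuous_on {0..T} u" and K: "0 < K"
    and bd: "\<And>t. t \<in> {0..T} \<Longrightarrow> u t \<le> S + K * integral {0..t} u"
    and t: "t \<in> {0..T}"
  shows "u t \<le> S * exp (K * t)"
proof -
  define V where "V s = integral {0..s} u" for s
  define \<phi> where "\<phi> s = exp (- K * s) * (V s + S / K)" for s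
  define \<phi>' where "\<phi>' s = exp (- K * s) * (u s - K * V s - S)" for s
  have t0: "0 \<le> t" "t \<le> T" using t by auto
  have uct: "continuous_on {0..t} u" using continuous_on_subset[OF uc] t0 by auto
  have Vc: "continuous_on {0..t} V"
    unfolding V_def by (rule indefinite_integral_continuous_1[OF integrable_continuous_interval[OF uct]])
  have dV: "(V has_real_derivative u s) (at s within {0..t})" if "s \<in> {0..t}" for s
    unfolding V_def by (rule integral_has_real_derivative[OF uct that])
  have dphi: "(\<phi> has_real_derivative \<phi>' s) (at s within {0..t})" if "s \<in> {0..t}" for s
  proof -
    have d1: "((\<lambda>s. exp (- K * s)) has_real_derivative exp (- K * s) * (- K)) (at s within {0..t})"
      by (rule DERIV_chain2[OF DERIV_exp]) (auto intro!: derivative_eq_intros)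
    have d2: "((\<lambda>s. V s + S / K) has_real_derivative u s) (at s within {0..t})"
      using DERIV_add[OF dV[OF that] DERIV_const[of "S / K"]] by simp
    have "(\<phi> has_real_derivative exp (- K * s) * (- K) * (V s + S / K) + u s * exp (- K * s)) (at s within {0..t})"
      unfolding \<phi>_def by (rule DERIV_mult[OF d1 d2])
    moreover have "exp (- K * s) * (- K) * (V s + S / K) + u s * exp (- K * s) = \<phi>' s"
      unfolding \<phi>'_def using K by (simp add: field_simps)
    ultimately show ?thesis by simp
  qed
  have phic: "continuous_on {0..t} \<phi>'" unfolding \<phi>'_def using uct Vc by (intro continuous_intros)
  have "(\<phi>' has_integral (\<phi> t - \<phi> 0)) {0..t}"
    by (rule fundamental_theorem_of_calculus[OF t0(1)])
       (use dphi in \<open>auto simp: has_real_derivative_iff_has_vector_derivative[symmetric]\<close>)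
  then have "\<phi> t - \<phi> 0 = integral {0..t} \<phi>'" by (simp add: integral_unique)
  also have "\<dots> \<le> (t - 0) * 0"
  proof (rule int_ub[OF phic t0(1)])
    fix s assume s: "s \<in> {0..t}"
    have "u s - K * V s - S \<le> 0" using bd[of s] s t0 by (simp add: V_def)
    then show "\<phi>' s \<le> 0" unfolding \<phi>'_def by (simp add: mult_nonneg_nonpos)
  qed
  finally have "\<phi> t \<le> \<phi> 0" by simp
  then have "exp (- K * t) * (V t + S / K) \<le> S / K" by (simp add: \<phi>_def V_def)
  then have "V t + S / K \<le> S / K * exp (K * t)"
    by (simp add: exp_minus field_simps)
  then have "K * (V t + S / K) \<le> K * (S / K * exp (K * t))" using K by (intro mult_left_mono) auto
  then have "K * V t \<le> S * exp (K * t) - S" using K by (simp add: distrib_left)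
  then show ?thesis using bd[OF t] by (simp add: V_def)
qed

lemma pathwise:
  fixes Zp w :: "real \<Rightarrow> real \<times> real" and mx my :: "real \<Rightarrow> real"
  assumes mu: "0 < \<mu>" "\<mu> < 1" and N: "1 \<le> N" and T: "0 \<le> T"
    and Zc: "continuous_on {0..} Zp" and Zr: "\<And>t. 0 \<le> t \<Longrightarrow> Zp t \<in> {0..1} \<times> {0..1}"
    and wc: "continuous_on {0..} w" and wr: "\<And>t. 0 \<le> t \<Longrightarrow> w t \<in> {0..1} \<times> {0..1}"
    and wx: "\<And>t. 0 \<le> t \<Longrightarrow> fst (w t) = x0 + integral {0..t} (\<lambda>s. bX N \<mu> (w s))"
    and wy: "\<And>t. 0 \<le> t \<Longrightarrow> snd (w t) = y0 + integral {0..t} (\<lambda>s. bY N \<mu> (w s))"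
    and mx: "\<And>t. mx t = fst (Zp t) - x0 - integral {0..t} (\<lambda>s. bX N \<mu> (Zp s))"
    and my: "\<And>t. my t = snd (Zp t) - y0 - integral {0..t} (\<lambda>s. bY N \<mu> (Zp s))"
    and s0: "\<And>t. t \<in> {0..T} \<Longrightarrow> \<bar>mx t\<bar> + \<bar>my t\<bar> \<le> s0"
    and t: "t \<in> {0..T}"
  shows "(norm (Zp t - w t))^2 \<le> s0^2 * exp (2 * (12 * real N) * T)"
proof -
  define K where "K = 12 * real N"
  have K: "0 < K" using N by (simp add: K_def)
  have Zc': "continuous_on {0..b} Zp" for b using continuous_on_subset[OF Zc] by auto
  have wc': "continuous_on {0..b} w" for b using continuous_on_subset[OF wc] by auto
  define dx where "dx s = fst (Zp s) - fst (w s)" for s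
  define dy where "dy s = snd (Zp s) - snd (w s)" for s
  define u where "u s = \<bar>dx s\<bar> + \<bar>dy s\<bar>" for s
  have uc: "continuous_on {0..b} u" for b
    unfolding u_def dx_def dy_def using Zc' wc' by (intro continuous_intros)
  have ub: "u s \<le> s0 + K * integral {0..s} u" if s: "s \<in> {0..T}" for s
  proof -
    have s0': "0 \<le> s" using s by simp
    have ZbX: "continuous_on {0..s} (\<lambda>r. bX N \<mu> (Zp r))" by (rule bX_cont[OF Zc'])
    have wbX: "continuous_on {0..s} (\<lambda>r. bX N \<mu> (w r))" by (rule bX_cont[OF wc'])
    have ZbY: "continuous_on {0..s} (\<lambda>r. bY N \<mu> (Zp r))" by (rule bY_cont[OF Zc'])
    have wbY: "continuous_on {0..s} (\<lambda>r. bY N \<mu> (w r))" by (rule bY_cont[OF wc'])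
    have ex: "dx s = mx s + integral {0..s} (\<lambda>r. bX N \<mu> (Zp r) - bX N \<mu> (w r))"
      unfolding dx_def mx wx[OF s0']
      using integral_diff[OF integrable_continuous_interval[OF ZbX] integrable_continuous_interval[OF wbX]] by simp
    have ey: "dy s = my s + integral {0..s} (\<lambda>r. bY N \<mu> (Zp r) - bY N \<mu> (w r))"
      unfolding dy_def my wy[OF s0']
      using integral_diff[OF integrable_continuous_interval[OF ZbY] integrable_continuous_interval[OF wbY]] by simp
    have iu: "(\<lambda>r. 6 * real N * u r) integrable_on {0..s}"
      by (rule integrable_continuous_interval) (use uc in \<open>intro continuous_intros\<close>)
    have lipr: "\<bar>bX N \<mu> (Zp r) - bX N \<mu> (w r)\<bar> \<le> 6 * real N * u r"
        "\<bar>bY N \<mu> (Zp r) - bY N \<mu> (w r)\<bar> \<le> 6 * real N * u r" if "r \<in> {0..s}" for r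
      using lip_b[OF mu Zr wr, of r r N] that unfolding u_def dx_def dy_def by auto
    have ix: "\<bar>integral {0..s} (\<lambda>r. bX N \<mu> (Zp r) - bX N \<mu> (w r))\<bar> \<le> integral {0..s} (\<lambda>r. 6 * real N * u r)"
      using integral_norm_bound_integral[OF integrable_continuous_interval iu, of "\<lambda>r. bX N \<mu> (Zp r) - bX N \<mu> (w r)"]
        lipr(1) continuous_on_diff[OF ZbX wbX] by auto
    have iy: "\<bar>integral {0..s} (\<lambda>r. bY N \<mu> (Zp r) - bY N \<mu> (w r))\<bar> \<le> integral {0..s} (\<lambda>r. 6 * real N * u r)"
      using integral_norm_bound_integral[OF integrable_continuous_interval iu, of "\<lambda>r. bY N \<mu> (Zp r) - bY N \<mu> (w r)"]
        lipr(2) continuous_on_diff[OF ZbY wbY] by auto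
    have "integral {0..s} (\<lambda>r. 6 * real N * u r) = 6 * real N * integral {0..s} u" by simp
    moreover have "\<bar>dx s\<bar> \<le> \<bar>mx s\<bar> + \<bar>integral {0..s} (\<lambda>r. bX N \<mu> (Zp r) - bX N \<mu> (w r))\<bar>"
      unfolding ex by (rule abs_triangle_ineq)
    moreover have "\<bar>dy s\<bar> \<le> \<bar>my s\<bar> + \<bar>integral {0..s} (\<lambda>r. bY N \<mu> (Zp r) - bY N \<mu> (w r))\<bar>"
      unfolding ey by (rule abs_triangle_ineq)
    moreover have "u s = \<bar>dx s\<bar> + \<bar>dy s\<bar>" by (simp add: u_def)
    ultimately have "u s \<le> (\<bar>mx s\<bar> + \<bar>my s\<bar>) + 2 * (6 * real N * integral {0..s} u)"
      using ix iy by linarith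
    then show ?thesis using s0[OF s] by (simp add: K_def)
  qed
  have s00: "0 \<le> s0" using s0[of 0] T by (metis abs_ge_zero add_nonneg_nonneg atLeastAtMost_iff order_refl order_trans)
  have "u t \<le> s0 * exp (K * t)" by (rule gronwall[OF uc K ub t])
  also have "\<dots> \<le> s0 * exp (K * T)" using t K s00 by (intro mult_left_mono) auto
  finally have ut: "u t \<le> s0 * exp (K * T)" .
  have "(norm (Zp t - w t))^2 = (dx t)^2 + (dy t)^2"
  proof -
    have "Zp t - w t = (dx t, dy t)" unfolding dx_def dy_def by (simp add: prod_eq_iff)
    then show ?thesis by (simp add: norm_Pair)
  qed
  also have "\<dots> \<le> (u t)^2" unfolding u_def by (simp add: power2_eq_square abs_mult algebra_simps)
  also have "\<dots> \<le> (s0 * exp (K * T))^2" using ut by (intro power_mono) (auto simp: u_def)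
  also have "\<dots> = s0^2 * exp (2 * K * T)" by (simp add: power_mult_distrib exp_double[symmetric] algebra_simps)
  finally show ?thesis by (simp add: K_def)
qed



lemma mp_mart:
  assumes "solves_mp_L1 N \<mu> M F Z z0" "C2_partials f fx fy fxx fxy fyy"
  shows "mart M F (\<lambda>t \<omega>. f (Z t \<omega>) - f (Z 0 \<omega>) - integral {0..t} (\<lambda>s. L1 N \<mu> fx fy fxx fyy (Z s \<omega>)))"
  using assms unfolding solves_mp_L1_def mart_def Let_def by blast

lemma C2_fst: "C2_partials fst (\<lambda>_. 1) (\<lambda>_. 0) (\<lambda>_. 0) (\<lambda>_. 0) (\<lambda>_. 0)"
  unfolding C2_partials_def by (auto intro!: derivative_eq_intros continuous_intros)
lemma C2_snd: "C2_partials snd (\<lambda>_. 0) (\<lambda>_. 1) (\<lambda>_. 0) (\<lambda>_. 0) (\<lambda>_. 0)"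
  unfolding C2_partials_def by (auto intro!: derivative_eq_intros continuous_intros)
lemma C2_fst2: "C2_partials (\<lambda>z. (fst z)^2) (\<lambda>z. 2 * fst z) (\<lambda>_. 0) (\<lambda>_. 2) (\<lambda>_. 0) (\<lambda>_. 0)"
  unfolding C2_partials_def by (auto intro!: derivative_eq_intros continuous_intros)
lemma C2_snd2: "C2_partials (\<lambda>z. (snd z)^2) (\<lambda>_. 0) (\<lambda>z. 2 * snd z) (\<lambda>_. 0) (\<lambda>_. 0) (\<lambda>_. 2)"
  unfolding C2_partials_def by (auto intro!: derivative_eq_intros continuous_intros)

lemma L1_fst: "L1 N \<mu> (\<lambda>_. 1) (\<lambda>_. 0) (\<lambda>_. 0) (\<lambda>_. 0) = bX N \<mu>"
  by (rule ext) (simp add: L1_def bX_def Let_def)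
lemma L1_snd: "L1 N \<mu> (\<lambda>_. 0) (\<lambda>_. 1) (\<lambda>_. 0) (\<lambda>_. 0) = bY N \<mu>"
  by (rule ext) (simp add: L1_def bY_def Let_def)
lemma L1_fst2: "L1 N \<mu> (\<lambda>z. 2 * fst z) (\<lambda>_. 0) (\<lambda>_. 2) (\<lambda>_. 0) = (\<lambda>z. fst z * (1 - fst z) + 2 * fst z * bX N \<mu> z)"
  by (rule ext) (simp add: L1_def bX_def Let_def field_simps)
lemma L1_snd2: "L1 N \<mu> (\<lambda>_. 0) (\<lambda>z. 2 * snd z) (\<lambda>_. 0) (\<lambda>_. 2) = (\<lambda>z. snd z * (1 - snd z) + 2 * snd z * bY N \<mu> z)"
  by (rule ext) (simp add: L1_def bY_def Let_def field_simps)

lemma bX_bound: "0 < \<mu> \<Longrightarrow> \<mu> < 1 \<Longrightarrow> z \<in> {0..1} \<times> {0..1} \<Longrightarrow> \<bar>bX N \<mu> z\<bar> \<le> 2 * real N"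
  and bY_bound: "0 < \<mu> \<Longrightarrow> \<mu> < 1 \<Longrightarrow> z \<in> {0..1} \<times> {0..1} \<Longrightarrow> \<bar>bY N \<mu> z\<bar> \<le> 2 * real N"
proof -
  assume mu: "0 < \<mu>" "\<mu> < 1" and z: "z \<in> {0..1} \<times> {0..1}"
  obtain a b where ab: "z = (a, b)" by (cases z)
  have r: "0 \<le> a" "a \<le> 1" "0 \<le> b" "b \<le> 1" using z ab by auto
  have p: "0 \<le> a^2 * b^2" "a^2 * b^2 \<le> 1" using r by (auto simp: power_le_one mult_le_one)
  have m: "\<bar>\<mu> - a^2 * b^2\<bar> \<le> 1" unfolding abs_le_iff using p mu by linarith
  have "\<bar>(1 - a) * (\<mu> - a^2 * b^2)\<bar> \<le> 1 * 1" unfolding abs_mult using r m by (intro mult_mono) auto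
  then show "\<bar>bX N \<mu> z\<bar> \<le> 2 * real N" unfolding bX_def ab
    by (simp add: abs_mult mult.assoc mult_left_le)
  have "\<bar>(1 - b) * (\<mu> - a^2 * b^2)\<bar> \<le> 1 * 1" unfolding abs_mult using r m by (intro mult_mono) auto
  then show "\<bar>bY N \<mu> z\<bar> \<le> 2 * real N" unfolding bY_def ab
    by (simp add: abs_mult mult.assoc mult_left_le)
qed

lemma rmax_meas: "(\<And>k. (\<lambda>\<omega>. x \<omega> k) \<in> borel_measurable M) \<Longrightarrow> (\<lambda>\<omega>. rmax (x \<omega>) n) \<in> borel_measurable M"
  by (induction n) auto

lemma main_bound:
  assumes sol: "solves_mp_L1 N \<mu> M F Z (x0, y0)" and ode: "ode_sol_L1 N \<mu> (x0, y0) w"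
    and N: "1 \<le> N" and mu: "0 < \<mu>" "\<mu> < 1"
    and x0: "0 < x0" "x0 < 1" and y0: "0 < y0" "y0 < 1" and T: "0 < T"
  shows "(\<integral>\<^sup>+\<omega>. ennreal (SUP t\<in>{0..T}. (norm (Z t \<omega> - w t))^2) \<partial>M)
           \<le> ennreal (4 * T * exp (2 * (12 * real N) * T))"
proof -
  have P: "prob_space M" and Fi: "is_filtration M F"
    and ZF: "\<And>t. 0 \<le> t \<Longrightarrow> Z t \<in> borel_measurable (F t)"
    and Z0: "\<And>\<omega>. \<omega> \<in> space M \<Longrightarrow> Z 0 \<omega> = (x0, y0)"
    and Zc: "\<And>\<omega>. \<omega> \<in> space M \<Longrightarrow> continuous_on {0..} (\<lambda>t. Z t \<omega>)"
    and Zr: "\<And>\<omega> t. \<omega> \<in> space M \<Longrightarrow> 0 \<le> t \<Longrightarrow> Z t \<omega> \<in> {0..1} \<times> {0..1}"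
    using sol unfolding solves_mp_L1_def by auto
  interpret prob_space M by (rule P)
  define K where "K = 12 * real N"
  define MX where "MX t \<omega> = fst (Z t \<omega>) - fst (Z 0 \<omega>) - integral {0..t} (\<lambda>s. bX N \<mu> (Z s \<omega>))" for t \<omega>
  define MY where "MY t \<omega> = snd (Z t \<omega>) - snd (Z 0 \<omega>) - integral {0..t} (\<lambda>s. bY N \<mu> (Z s \<omega>))" for t \<omega>
  define QX where "QX t \<omega> = (fst (Z t \<omega>))^2 - (fst (Z 0 \<omega>))^2
     - integral {0..t} (\<lambda>s. fst (Z s \<omega>) * (1 - fst (Z s \<omega>)) + 2 * fst (Z s \<omega>) * bX N \<mu> (Z s \<omega>))" for t \<omega>
  define QY where "QY t \<omega> = (snd (Z t \<omega>))^2 - (snd (Z 0 \<omega>))^2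
     - integral {0..t} (\<lambda>s. snd (Z s \<omega>) * (1 - snd (Z s \<omega>)) + 2 * snd (Z s \<omega>) * bY N \<mu> (Z s \<omega>))" for t \<omega>
  have mX: "mart M F MX" using mp_mart[OF sol C2_fst] unfolding L1_fst MX_def by simp
  have mY: "mart M F MY" using mp_mart[OF sol C2_snd] unfolding L1_snd MY_def by simp
  have mQX: "mart M F QX" using mp_mart[OF sol C2_fst2] unfolding L1_fst2 QX_def by simp
  have mQY: "mart M F QY" using mp_mart[OF sol C2_snd2] unfolding L1_snd2 QY_def by simp
  have Zc': "continuous_on {a..b} (\<lambda>t. Z t \<omega>)" if "\<omega> \<in> space M" "0 \<le> a" for a b \<omega>
    using continuous_on_subset[OF Zc[OF that(1)]] that(2) by auto
  have B0: "0 \<le> 2 * real N" by simp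
  have varX: "(\<integral>\<omega>. (MX T \<omega>)^2 \<partial>M) \<le> T / 4"
  proof (rule var_bound[OF P Fi T B0, where X="\<lambda>t \<omega>. fst (Z t \<omega>)" and \<beta>="\<lambda>t \<omega>. bX N \<mu> (Z t \<omega>)" and Qx=QX and Mx=MX])
    show "continuous_on {0..} (\<lambda>t. fst (Z t \<omega>))" if "\<omega> \<in> space M" for \<omega>
      using Zc[OF that] by (intro continuous_intros)
    show "continuous_on {0..} (\<lambda>t. bX N \<mu> (Z t \<omega>))" if "\<omega> \<in> space M" for \<omega>
      by (rule bX_cont[OF Zc[OF that]])
    show "0 \<le> fst (Z t \<omega>) \<and> fst (Z t \<omega>) \<le> 1" if "\<omega> \<in> space M" "0 \<le> t" for \<omega> t
      using Zr[OF that] by (auto simp: mem_Times_iff)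
    show "\<bar>bX N \<mu> (Z t \<omega>)\<bar> \<le> 2 * real N" if "\<omega> \<in> space M" "0 \<le> t" for \<omega> t
      by (rule bX_bound[OF mu Zr[OF that]])
    show "(\<lambda>\<omega>. fst (Z t \<omega>)) \<in> borel_measurable (F t)" if "0 \<le> t" for t
      by (rule measurable_compose[OF ZF[OF that] borel_measurable_continuous_onI]) (intro continuous_intros)
  qed (auto simp: MX_def QX_def mX mQX)
  have varY: "(\<integral>\<omega>. (MY T \<omega>)^2 \<partial>M) \<le> T / 4"
  proof (rule var_bound[OF P Fi T B0, where X="\<lambda>t \<omega>. snd (Z t \<omega>)" and \<beta>="\<lambda>t \<omega>. bY N \<mu> (Z t \<omega>)" and Qx=QY and Mx=MY])
    show "continuous_on {0..} (\<lambda>t. snd (Z t \<omega>))" if "\<omega> \<in> space M" for \<omega>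
      using Zc[OF that] by (intro continuous_intros)
    show "continuous_on {0..} (\<lambda>t. bY N \<mu> (Z t \<omega>))" if "\<omega> \<in> space M" for \<omega>
      by (rule bY_cont[OF Zc[OF that]])
    show "0 \<le> snd (Z t \<omega>) \<and> snd (Z t \<omega>) \<le> 1" if "\<omega> \<in> space M" "0 \<le> t" for \<omega> t
      using Zr[OF that] by (auto simp: mem_Times_iff)
    show "\<bar>bY N \<mu> (Z t \<omega>)\<bar> \<le> 2 * real N" if "\<omega> \<in> space M" "0 \<le> t" for \<omega> t
      by (rule bY_bound[OF mu Zr[OF that]])
    show "(\<lambda>\<omega>. snd (Z t \<omega>)) \<in> borel_measurable (F t)" if "0 \<le> t" for t
      by (rule measurable_compose[OF ZF[OF that] borel_measurable_continuous_onI]) (intro continuous_intros)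
  qed (auto simp: MY_def QY_def mY mQY)
  have MXb: "\<bar>MX t \<omega>\<bar> \<le> 1 + 2 * real N * T" if om: "\<omega> \<in> space M" and t: "0 \<le> t" "t \<le> T" for t \<omega>
  proof -
    have "\<bar>integral {0..t} (\<lambda>s. bX N \<mu> (Z s \<omega>))\<bar> \<le> (t - 0) * (2 * real N)"
      by (rule int_abs[OF bX_cont[OF Zc'[OF om order_refl]] t(1)]) (use bX_bound[OF mu Zr[OF om]] in auto)
    also have "\<dots> \<le> 2 * real N * T" using t by (simp add: mult.commute mult_right_mono)
    finally have "\<bar>integral {0..t} (\<lambda>s. bX N \<mu> (Z s \<omega>))\<bar> \<le> 2 * real N * T" .
    moreover have "\<bar>fst (Z t \<omega>) - fst (Z 0 \<omega>)\<bar> \<le> 1" using Zr[OF om t(1)] Zr[OF om order_refl] by (auto simp: mem_Times_iff)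
    ultimately show ?thesis unfolding MX_def by linarith
  qed
  have MYb: "\<bar>MY t \<omega>\<bar> \<le> 1 + 2 * real N * T" if om: "\<omega> \<in> space M" and t: "0 \<le> t" "t \<le> T" for t \<omega>
  proof -
    have "\<bar>integral {0..t} (\<lambda>s. bY N \<mu> (Z s \<omega>))\<bar> \<le> (t - 0) * (2 * real N)"
      by (rule int_abs[OF bY_cont[OF Zc'[OF om order_refl]] t(1)]) (use bY_bound[OF mu Zr[OF om]] in auto)
    also have "\<dots> \<le> 2 * real N * T" using t by (simp add: mult.commute mult_right_mono)
    finally have "\<bar>integral {0..t} (\<lambda>s. bY N \<mu> (Z s \<omega>))\<bar> \<le> 2 * real N * T" .
    moreover have "\<bar>snd (Z t \<omega>) - snd (Z 0 \<omega>)\<bar> \<le> 1" using Zr[OF om t(1)] Zr[OF om order_refl] by (auto simp: mem_Times_iff)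
    ultimately show ?thesis unfolding MY_def by linarith
  qed
  define tt where "tt n k = real k * T / real n" for n k :: nat
  define rX where "rX n \<omega> = rmax (\<lambda>k. MX (tt n k) \<omega>) n" for n \<omega>
  define rY where "rY n \<omega> = rmax (\<lambda>k. MY (tt n k) \<omega>) n" for n \<omega>
  define H where "H n \<omega> = 2 * exp (2 * K * T) * ((rX n \<omega>)^2 + (rY n \<omega>)^2)" for n \<omega>
  have tt0: "0 \<le> tt n k" for n k using T by (simp add: tt_def)
  have ttle: "k \<le> n \<Longrightarrow> 0 < n \<Longrightarrow> tt n k \<le> T" for n k using T by (simp add: tt_def field_simps mult_left_mono)
  have MXM: "MX t \<in> borel_measurable M" if "0 \<le> t" for t
    using mX that meas_filt_M[OF Fi] unfolding mart_def by blast
  have MYM: "MY t \<in> borel_measurable M" if "0 \<le> t" for t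
    using mY that meas_filt_M[OF Fi] unfolding mart_def by blast
  have rXM: "rX n \<in> borel_measurable M" for n
    unfolding rX_def by (rule rmax_meas) (use MXM[OF tt0] in simp)
  have rYM: "rY n \<in> borel_measurable M" for n
    unfolding rY_def by (rule rmax_meas) (use MYM[OF tt0] in simp)
  have HM: "H n \<in> borel_measurable M" for n unfolding H_def using rXM rYM by measurable
  have H0: "0 \<le> H n \<omega>" for n \<omega> unfolding H_def by simp
  have rXb: "\<bar>rX n \<omega>\<bar> \<le> 1 + 2 * real N * T" if "\<omega> \<in> space M" "0 < n" for n \<omega>
    unfolding rX_def using rmax_le[of n "\<lambda>k. MX (tt n k) \<omega>"] MXb[OF that(1) tt0 ttle] that rmax_nonneg by auto
  have rYb: "\<bar>rY n \<omega>\<bar> \<le> 1 + 2 * real N * T" if "\<omega> \<in> space M" "0 < n" for n \<omega>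
    unfolding rY_def using rmax_le[of n "\<lambda>k. MY (tt n k) \<omega>"] MYb[OF that(1) tt0 ttle] that rmax_nonneg by auto
  have ib: "integrable M f" if "f \<in> borel_measurable M" "\<And>\<omega>. \<omega> \<in> space M \<Longrightarrow> \<bar>f \<omega>\<bar> \<le> C"
    for f :: "'a \<Rightarrow> real" and C :: real
    using that by (intro integrable_const_bound[where B=C]) auto
  have iX: "integrable M (\<lambda>\<omega>. (rX n \<omega>)^2)" if "0 < n" for n
    by (rule ib[of _ "(1 + 2 * real N * T) * (1 + 2 * real N * T)"]) (use rXM rXb[OF _ that] sq_bound in auto)
  have iY: "integrable M (\<lambda>\<omega>. (rY n \<omega>)^2)" if "0 < n" for n
    by (rule ib[of _ "(1 + 2 * real N * T) * (1 + 2 * real N * T)"]) (use rYM rYb[OF _ that] sq_bound in auto)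
  have doobX: "(\<integral>\<omega>. (rX n \<omega>)^2 \<partial>M) \<le> T" if "0 < n" for n
  proof -
    have "(\<integral>\<omega>. (rX n \<omega>)^2 \<partial>M) \<le> 4 * (\<integral>\<omega>. (MX T \<omega>)^2 \<partial>M)"
      unfolding rX_def tt_def by (rule doob_grid[OF P Fi mX _ that MXb]) (use T in auto)
    then show ?thesis using varX by simp
  qed
  have doobY: "(\<integral>\<omega>. (rY n \<omega>)^2 \<partial>M) \<le> T" if "0 < n" for n
  proof -
    have "(\<integral>\<omega>. (rY n \<omega>)^2 \<partial>M) \<le> 4 * (\<integral>\<omega>. (MY T \<omega>)^2 \<partial>M)"
      unfolding rY_def tt_def by (rule doob_grid[OF P Fi mY _ that MYb]) (use T in auto)
    then show ?thesis using varY by simp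
  qed
  have claimC: "integral\<^sup>N M (\<lambda>\<omega>. ennreal (H n \<omega>)) \<le> ennreal (4 * T * exp (2 * K * T))" if n: "0 < n" for n
  proof -
    have "integral\<^sup>N M (\<lambda>\<omega>. ennreal (H n \<omega>)) = ennreal (\<integral>\<omega>. H n \<omega> \<partial>M)"
      by (rule nn_integral_eq_integral) (use iX[OF n] iY[OF n] H0 in \<open>auto simp: H_def\<close>)
    also have "(\<integral>\<omega>. H n \<omega> \<partial>M) = 2 * exp (2 * K * T) * ((\<integral>\<omega>. (rX n \<omega>)^2 \<partial>M) + (\<integral>\<omega>. (rY n \<omega>)^2 \<partial>M))"
      unfolding H_def using iX[OF n] iY[OF n] by simp
    also have "\<dots> \<le> 2 * exp (2 * K * T) * (T + T)"
      using doobX[OF n] doobY[OF n] by (intro mult_left_mono add_mono) auto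
    finally have "integral\<^sup>N M (\<lambda>\<omega>. ennreal (H n \<omega>)) \<le> ennreal (2 * exp (2 * K * T) * (T + T))"
      by (simp add: ennreal_leI)
    moreover have "2 * exp (2 * K * T) * (T + T) = 4 * T * exp (2 * K * T)" by simp
    ultimately show ?thesis by metis
  qed
  have wc: "continuous_on {0..} w"
    and wx: "\<And>t. 0 \<le> t \<Longrightarrow> fst (w t) = x0 + integral {0..t} (\<lambda>s. bX N \<mu> (w s))"
    and wy: "\<And>t. 0 \<le> t \<Longrightarrow> snd (w t) = y0 + integral {0..t} (\<lambda>s. bY N \<mu> (w s))"
    and wr: "\<And>t. 0 \<le> t \<Longrightarrow> w t \<in> {0..1} \<times> {0..1}"
    using ode_facts[OF ode N mu(1) x0 y0] by auto
  have claimA: "ennreal (SUP t\<in>{0..T}. (norm (Z t \<omega> - w t))^2) \<le> liminf (\<lambda>n. ennreal (H n \<omega>))"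
    if om: "\<omega> \<in> space M" for \<omega>
  proof -
    define e where "e = exp (2 * K * T)"
    have e0: "0 < e" by (simp add: e_def)
    define LL where "LL = liminf (\<lambda>n. ennreal (H n \<omega>))"
    have MXc: "continuous_on {0..T} (\<lambda>s. MX s \<omega>)"
      unfolding MX_def using Zc'[OF om order_refl]
      by (intro continuous_intros indefinite_integral_continuous_1 integrable_continuous_interval bX_cont) auto
    have MYc: "continuous_on {0..T} (\<lambda>s. MY s \<omega>)"
      unfolding MY_def using Zc'[OF om order_refl]
      by (intro continuous_intros indefinite_integral_continuous_1 integrable_continuous_interval bY_cont) auto
    have per_t: "ennreal (2 * e * ((MX t \<omega>)^2 + (MY t \<omega>)^2)) \<le> LL" if t: "t \<in> {0..T}" for t
    proof -
      define k where "k n = nat \<lfloor>t * real n / T\<rfloor>" for n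
      define g where "g n = tt n (k n)" for n
      have kn: "k n \<le> n" if "0 < n" for n
      proof -
        have "t * real n / T \<le> real n" using t T that by (simp add: divide_le_eq mult_right_mono)
        then have "\<lfloor>t * real n / T\<rfloor> \<le> int n" by (simp add: floor_le_iff)
        then show ?thesis unfolding k_def by simp
      qed
      have gb: "t - T / real n \<le> g n \<and> g n \<le> t" if "0 < n" for n
      proof -
        define q where "q = t * real n / T"
        have q0: "0 \<le> q" using t T by (simp add: q_def)
        have kq: "real (k n) = real_of_int \<lfloor>q\<rfloor>" unfolding k_def q_def[symmetric] using q0 by simp
        have g: "g n = real_of_int \<lfloor>q\<rfloor> * T / real n" unfolding g_def tt_def kq ..
        have "real_of_int \<lfloor>q\<rfloor> \<le> q" "q - 1 \<le> real_of_int \<lfloor>q\<rfloor>" by simp_all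
        then have "real_of_int \<lfloor>q\<rfloor> * T / real n \<le> q * T / real n"
                  "(q - 1) * T / real n \<le> real_of_int \<lfloor>q\<rfloor> * T / real n"
          using T that by (auto intro!: divide_right_mono mult_right_mono)
        moreover have "q * T / real n = t" "(q - 1) * T / real n = t - T / real n"
          using T that by (simp_all add: q_def field_simps)
        ultimately show ?thesis unfolding g by simp
      qed
      have gT: "g n \<in> {0..T}" for n
        using tt0[of n "k n"] ttle[of "k n" n] kn[of n] unfolding g_def
        using T by (cases "n = 0") (auto simp: tt_def)
      have glim: "g \<longlonglongrightarrow> t"
      proof (rule real_tendsto_sandwich[where f="\<lambda>n. t - T / real n" and h="\<lambda>n. t"])
        show "\<forall>\<^sub>F n in sequentially. t - T / real n \<le> g n"
          using gb by (auto simp: eventually_sequentially intro!: exI[of _ 1])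
        show "\<forall>\<^sub>F n in sequentially. g n \<le> t"
          using gb by (auto simp: eventually_sequentially intro!: exI[of _ 1])
        show "(\<lambda>n. t - T / real n) \<longlonglongrightarrow> t"
          using tendsto_diff[OF tendsto_const lim_const_over_n[of T]] by simp
      qed simp
      have lX: "(\<lambda>n. MX (g n) \<omega>) \<longlonglongrightarrow> MX t \<omega>"
        using continuous_on_tendsto_compose[OF MXc glim t] gT by simp
      have lY: "(\<lambda>n. MY (g n) \<omega>) \<longlonglongrightarrow> MY t \<omega>"
        using continuous_on_tendsto_compose[OF MYc glim t] gT by simp
      have lim: "(\<lambda>n. ennreal (2 * e * ((MX (g n) \<omega>)^2 + (MY (g n) \<omega>)^2)))
                  \<longlonglongrightarrow> ennreal (2 * e * ((MX t \<omega>)^2 + (MY t \<omega>)^2))"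
        by (intro tendsto_ennrealI tendsto_intros lX lY)
      have ev: "\<forall>\<^sub>F n in sequentially. ennreal (2 * e * ((MX (g n) \<omega>)^2 + (MY (g n) \<omega>)^2)) \<le> ennreal (H n \<omega>)"
        unfolding eventually_sequentially
      proof (intro exI[of _ 1] allI impI)
        fix n :: nat assume "1 \<le> n"
        then have n: "0 < n" by simp
        have "\<bar>MX (g n) \<omega>\<bar> \<le> rX n \<omega>" unfolding g_def rX_def by (rule rmax_ge[OF kn[OF n]])
        then have "\<bar>MX (g n) \<omega>\<bar>^2 \<le> (rX n \<omega>)^2" by (rule power_mono) simp
        moreover have "\<bar>MY (g n) \<omega>\<bar> \<le> rY n \<omega>" unfolding g_def rY_def by (rule rmax_ge[OF kn[OF n]])
        then have "\<bar>MY (g n) \<omega>\<bar>^2 \<le> (rY n \<omega>)^2" by (rule power_mono) simp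
        ultimately have "2 * e * ((MX (g n) \<omega>)^2 + (MY (g n) \<omega>)^2) \<le> H n \<omega>"
          unfolding H_def e_def[symmetric] using e0 by (intro mult_left_mono add_mono) auto
        then show "ennreal (2 * e * ((MX (g n) \<omega>)^2 + (MY (g n) \<omega>)^2)) \<le> ennreal (H n \<omega>)"
          by (rule ennreal_leI)
      qed
      have "ennreal (2 * e * ((MX t \<omega>)^2 + (MY t \<omega>)^2))
            = liminf (\<lambda>n. ennreal (2 * e * ((MX (g n) \<omega>)^2 + (MY (g n) \<omega>)^2)))"
        by (rule lim_imp_Liminf[symmetric]) (use lim in simp_all)
      also have "\<dots> \<le> LL" unfolding LL_def by (rule Liminf_mono[OF ev])
      finally show ?thesis .
    qed
    show ?thesis
    proof (cases "LL = \<top>")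
      case True then show ?thesis by (simp add: LL_def[symmetric])
    next
      case False
      then obtain r where r: "LL = ennreal r" "0 \<le> r" by (cases LL rule: ennreal_cases) auto
      define s0 where "s0 = sqrt (r / e)"
      have s0b: "\<bar>MX t \<omega>\<bar> + \<bar>MY t \<omega>\<bar> \<le> s0" if t: "t \<in> {0..T}" for t
      proof -
        have "2 * e * ((MX t \<omega>)^2 + (MY t \<omega>)^2) \<le> r" using per_t[OF t] r by (simp add: ennreal_le_iff)
        then have "2 * ((MX t \<omega>)^2 + (MY t \<omega>)^2) \<le> r / e" using e0 by (simp add: field_simps)
        moreover have "(\<bar>MX t \<omega>\<bar> + \<bar>MY t \<omega>\<bar>)^2 \<le> 2 * ((MX t \<omega>)^2 + (MY t \<omega>)^2)"
          using sum_squares_bound[of "\<bar>MX t \<omega>\<bar>" "\<bar>MY t \<omega>\<bar>"] by (simp add: power2_eq_square algebra_simps)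
        ultimately show ?thesis unfolding s0_def by (intro real_le_rsqrt) linarith
      qed
      have pw: "(norm (Z t \<omega> - w t))^2 \<le> s0^2 * exp (2 * (12 * real N) * T)" if t: "t \<in> {0..T}" for t
      proof (rule pathwise[OF mu N _ Zc[OF om] Zr[OF om] wc wr wx wy _ _ s0b t])
        show "0 \<le> T" using T by simp
        show "MX s \<omega> = fst (Z s \<omega>) - x0 - integral {0..s} (\<lambda>s. bX N \<mu> (Z s \<omega>))" for s
          unfolding MX_def using Z0[OF om] by simp
        show "MY s \<omega> = snd (Z s \<omega>) - y0 - integral {0..s} (\<lambda>s. bY N \<mu> (Z s \<omega>))" for s
          unfolding MY_def using Z0[OF om] by simp
      qed
      have "s0^2 * exp (2 * (12 * real N) * T) = r"
        unfolding s0_def e_def[symmetric] K_def[symmetric] using r(2) e0 by simp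
      then have "(SUP t\<in>{0..T}. (norm (Z t \<omega> - w t))^2) \<le> r"
        using pw T by (intro cSUP_least) auto
      then show ?thesis using r by (simp add: ennreal_leI LL_def[symmetric])
    qed
  qed
  have "(\<integral>\<^sup>+\<omega>. ennreal (SUP t\<in>{0..T}. (norm (Z t \<omega> - w t))^2) \<partial>M)
        \<le> (\<integral>\<^sup>+\<omega>. liminf (\<lambda>n. ennreal (H n \<omega>)) \<partial>M)"
    by (rule nn_integral_mono) (rule claimA)
  also have "\<dots> \<le> liminf (\<lambda>n. integral\<^sup>N M (\<lambda>\<omega>. ennreal (H n \<omega>)))"
    by (rule nn_integral_liminf) (use HM in simp)
  also have "\<dots> \<le> ennreal (4 * T * exp (2 * K * T))"
    by (rule Liminf_le) (use claimC in \<open>auto simp: eventually_sequentially intro: exI[of _ 1]\<close>)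
  finally show ?thesis by (simp add: K_def)
qed



lemma final_arith:
  fixes N :: nat assumes N: "2 \<le> N"
  shows "4 * (1/96 * ln (real N) / real N) * exp (2 * (12 * real N) * (1/96 * ln (real N) / real N))
         \<le> real N powr (-1/2)"
proof -
  have Np: "0 < real N" using N by simp
  define a where "a = real N powr (1/4)"
  have a0: "0 < a" using Np by (simp add: a_def)
  have Nne: "real N \<noteq> 0" using Np by simp
  have ea: "exp (2 * (12 * real N) * (1/96 * ln (real N) / real N)) = a"
  proof -
    have "2 * (12 * real N) * (1/96 * ln (real N) / real N) = 1/4 * ln (real N)"
      using Nne by (simp add: field_simps)
    moreover have "exp (1/4 * ln (real N)) = a" unfolding a_def powr_def using Nne by simp
    ultimately show ?thesis by (simp only:)
  qed
  have a4: "a^4 = real N"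
    unfolding a_def using powr_power[of "real N" "1/4" 4] Nne by (simp only: of_nat_numeral) (simp add: powr_one)
  have a2: "real N powr (-1/2) = 1 / a^2"
  proof -
    have h: "a^2 = real N powr (1/2)" unfolding a_def using powr_power[of "real N" "1/4" 2] Nne
      by (simp only: of_nat_numeral) simp
    have "real N powr (-1/2) = inverse (real N powr (1/2))"
      using powr_minus[of "real N" "1/2"] by (simp only: minus_divide_left)
    also have "\<dots> = 1 / a^2" by (simp only: h inverse_eq_divide)
    finally show ?thesis .
  qed
  have lnN: "ln (real N) \<le> 4 * a"
  proof -
    have "ln a = 1/4 * ln (real N)" unfolding a_def by simp
    moreover have "ln a \<le> a - 1" by (rule ln_le_minus_one[OF a0])
    ultimately show ?thesis by simp
  qed
  define L where "L = ln (real N)"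
  have lnL: "L \<le> 4 * a" using lnN by (simp add: L_def)
  have "4 * (1/96 * ln (real N) / real N) * a = L * a / (24 * real N)"
    using Nne by (simp add: L_def field_simps)
  also have "\<dots> = L * a / (24 * a^4)" by (simp only: a4)
  also have "\<dots> = L / (24 * a^3)"
    using a0 by (simp add: eval_nat_numeral field_simps)
  also have "\<dots> \<le> (24 * a) / (24 * a^3)" using lnL a0 by (intro divide_right_mono) auto
  also have "\<dots> = 1 / a^2" using a0 by (simp add: power2_eq_square power3_eq_cube)
  finally have fin: "4 * (1/96 * ln (real N) / real N) * a \<le> 1 / a^2" .
  show ?thesis unfolding ea a2 by (rule fin)
qed

theorem theorem1:
  fixes \<mu> \<epsilon> :: real
  assumes "0 < \<mu>" "\<mu> < 1" "0 < \<epsilon>" "\<epsilon> < sqrt \<mu>"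
  shows "\<exists>\<gamma>>0. \<exists>N0::nat. \<forall>N\<ge>N0. \<forall>x0 y0.
           x0 \<in> {\<epsilon>..1-\<epsilon>} \<longrightarrow> y0 \<in> {\<epsilon>..1-\<epsilon>} \<longrightarrow>
           (\<forall>(M::'a measure) F Z w. solves_mp_L1 N \<mu> M F Z (x0, y0) \<longrightarrow>
              ode_sol_L1 N \<mu> (x0, y0) w \<longrightarrow>
              (\<integral>\<^sup>+\<omega>. ennreal (SUP t\<in>{0..\<gamma> * ln (real N) / real N}. (norm (Z t \<omega> - w t))^2) \<partial>M)
                \<le> ennreal (real N powr (-1/2)))"
proof (intro exI[of _ "1/96"] conjI exI[of _ 2] allI impI)
  show "(0::real) < 1/96" by simp
  fix N :: nat and x0 y0 :: real and M :: "'a measure" and F Z w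
  assume N: "2 \<le> N" and x: "x0 \<in> {\<epsilon>..1-\<epsilon>}" and y: "y0 \<in> {\<epsilon>..1-\<epsilon>}"
    and sol: "solves_mp_L1 N \<mu> M F Z (x0, y0)" and ode: "ode_sol_L1 N \<mu> (x0, y0) w"
  have T: "0 < 1/96 * ln (real N) / real N" using N by simp
  have "(\<integral>\<^sup>+\<omega>. ennreal (SUP t\<in>{0..1/96 * ln (real N) / real N}. (norm (Z t \<omega> - w t))^2) \<partial>M)
        \<le> ennreal (4 * (1/96 * ln (real N) / real N) * exp (2 * (12 * real N) * (1/96 * ln (real N) / real N)))"
    by (rule main_bound[OF sol ode _ assms(1,2) _ _ _ _ T]) (use N x y assms(3) in auto)
  also have "\<dots> \<le> ennreal (real N powr (-1/2))" by (rule ennreal_leI[OF final_arith[OF N]])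
  finally show "(\<integral>\<^sup>+\<omega>. ennreal (SUP t\<in>{0..1/96 * ln (real N) / real N}. (norm (Z t \<omega> - w t))^2) \<partial>M)
        \<le> ennreal (real N powr (-1/2))" .
qed

end
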